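(* Consider the networked SEIRS model with travel flows, under the standing assumptions (A1) for every $j\in[n]$, $\sum_{i\neq j}F_{ji}=\sum_{i\neq j}F_{ij}$, and (A2) $\alpha_i,\beta_i,\sigma_i,\delta_i>0$ and initial states in $[0,1]$ with $s_i+e_i+x_i+r_i=1$. Let $$U=\begin{bmatrix}-\Sigma-\Gamma+\Phi & B\\ \Sigma & -D-\Gamma+\Phi\end{bmatrix}\in\mathbb R^{2n\times 2n}.$$ If $s(U)>0$, then the healthy state $(s,e,x,r)=(\mathbf 1,\mathbf 0,\mathbf 0,\mathbf 0)$ is unstable (for the dynamics on the invariant set where $s_i+e_i+x_i+r_i=1$ for all $i$, i.e. for the $(e,x,r)$ dynamics obtained by substituting $s=\mathbf 1-e-x-r$).
   Context: Model: $n$ sub-populations with sizes $N_i>0$; $F_{ij}\ge 0$ is the flow of individuals from $j$ to $i$ ($F_{ii}=0$); $\gamma_j=\sum_{i\ne j}F_{ij}/N_j$; $w_{ij}=F_{ij}/\sum_{l\neq j}F_{lj}$, $w_{ii}=0$. Dynamics in vector form: $\dot s=Ar-(BX+\Gamma)s+\Phi s$, $\dot e=BXs-(\Sigma+\Gamma)e+\Phi e$, $\dot x=\Sigma e-(D+\Gamma)x+\Phi x$, $\dot r=Dx-(A+\Gamma)r+\Phi r$, where $A=\mathrm{diag}(\alpha_i)$, $B=\mathrm{diag}(\beta_i)$, $\Sigma=\mathrm{diag}(\sigma_i)$, $D=\mathrm{diag}(\delta_i)$, $X=\mathrm{diag}(x_i)$, $\Gamma=\mathrm{diag}(\gamma_i)$,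 and $\Phi=N^{-1}W\Gamma N$ with $N=\mathrm{diag}(N_i)$, $W=(w_{ij})$. For a real square matrix $M$, $s(M)$ is the largest real part of its eigenvalues. *)

theory Defs
  imports "HOL-Analysis.Analysis" "Jordan_Normal_Form.Spectral_Radius"
begin

text \<open>Sub-populations are indexed by 0..n-1. F i j is the flow from j to i, N i the size.\<close>

definition spectral_abscissa :: "real mat \<Rightarrow> real" where
  "spectral_abscissa M = Max (Re ` spectrum (map_mat complex_of_real M))"

definition gam :: "nat \<Rightarrow> (nat \<Rightarrow> nat \<Rightarrow> real) \<Rightarrow> (nat \<Rightarrow> real) \<Rightarrow> nat \<Rightarrow> real" where
  "gam n F N j = (\<Sum>i\<in>{..<n} - {j}. F i j) / N j"

definition wgt :: "nat \<Rightarrow> (nat \<Rightarrow> nat \<Rightarrow> real) \<Rightarrow> nat \<Rightarrow> nat \<Rightarrow> real" where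
  "wgt n F i j = (if i = j then 0 else F i j / (\<Sum>l\<in>{..<n} - {j}. F l j))"

text \<open>Entries of Phi = N^{-1} W Gamma N.\<close>
definition Phi :: "nat \<Rightarrow> (nat \<Rightarrow> nat \<Rightarrow> real) \<Rightarrow> (nat \<Rightarrow> real) \<Rightarrow> nat \<Rightarrow> nat \<Rightarrow> real" where
  "Phi n F N i j = (1 / N i) * wgt n F i j * gam n F N j * N j"

definition Umat :: "nat \<Rightarrow> (nat \<Rightarrow> nat \<Rightarrow> real) \<Rightarrow> (nat \<Rightarrow> real) \<Rightarrow> (nat \<Rightarrow> real)
    \<Rightarrow> (nat \<Rightarrow> real) \<Rightarrow> (nat \<Rightarrow> real) \<Rightarrow> real mat" where
  "Umat n F N \<beta> \<sigma> \<delta> = mat (2*n) (2*n) (\<lambda>(i, j).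
     if i < n \<and> j < n then (if i = j then - \<sigma> i - gam n F N i else 0) + Phi n F N i j
     else if i < n \<and> n \<le> j then (if j - n = i then \<beta> i else 0)
     else if n \<le> i \<and> j < n then (if i - n = j then \<sigma> j else 0)
     else (if i = j then - \<delta> (i - n) - gam n F N (i - n) else 0) + Phi n F N (i - n) (j - n))"

text \<open>Right-hand sides of the reduced (e,x,r) dynamics, obtained from the SEIRS
  model by substituting s = 1 - e - x - r.  State components are functions nat => real
  (only indices < n matter).\<close>
definition rhs_e where
  "rhs_e n F N \<beta> \<sigma> (e::nat\<Rightarrow>real) (x::nat\<Rightarrow>real) (r::nat\<Rightarrow>real) i =
     \<beta> i * x i * (1 - e i - x i - r i) - (\<sigma> i + gam n F N i) * e i
     + (\<Sum>j<n. Phi n F N i j * e j)"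

definition rhs_x where
  "rhs_x n F N \<sigma> \<delta> (e::nat\<Rightarrow>real) (x::nat\<Rightarrow>real) i =
     \<sigma> i * e i - (\<delta> i + gam n F N i) * x i + (\<Sum>j<n. Phi n F N i j * x j)"

definition rhs_r where
  "rhs_r n F N \<alpha> \<delta> (x::nat\<Rightarrow>real) (r::nat\<Rightarrow>real) i =
     \<delta> i * x i - (\<alpha> i + gam n F N i) * r i + (\<Sum>j<n. Phi n F N i j * r j)"

definition is_solution where
  "is_solution n F N \<alpha> \<beta> \<sigma> \<delta> T (e::nat\<Rightarrow>real\<Rightarrow>real) x r \<longleftrightarrow>
     (\<forall>i<n. \<forall>t\<in>{0..T}.
        (e i has_real_derivative rhs_e n F N \<beta> \<sigma> (\<lambda>k. e k t) (\<lambda>k. x k t) (\<lambda>k. r k t) i) (at t within {0..T}) \<and>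
        (x i has_real_derivative rhs_x n F N \<sigma> \<delta> (\<lambda>k. e k t) (\<lambda>k. x k t) i) (at t within {0..T}) \<and>
        (r i has_real_derivative rhs_r n F N \<alpha> \<delta> (\<lambda>k. x k t) (\<lambda>k. r k t) i) (at t within {0..T}))"

definition state_norm where
  "state_norm n (e::nat\<Rightarrow>real) x r = sqrt (\<Sum>i<n. (e i)\<^sup>2 + (x i)\<^sup>2 + (r i)\<^sup>2)"

text \<open>Admissible initial state (assumption A2): all of s,e,x,r in [0,1] with s = 1-e-x-r.\<close>
definition admissible where
  "admissible n (e::nat\<Rightarrow>real) x r \<longleftrightarrow>
     (\<forall>i<n. 0 \<le> e i \<and> 0 \<le> x i \<and> 0 \<le> r i \<and> e i + x i + r i \<le> 1)"

text \<open>Lyapunov instability of the healthy state: negation of Lyapunov stability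
  (there is eps > 0 such that arbitrarily close admissible initial states have a
  solution leaving the eps-ball).\<close>
definition healthy_unstable where
  "healthy_unstable n F N \<alpha> \<beta> \<sigma> \<delta> \<longleftrightarrow>
     (\<exists>\<epsilon>>0. \<forall>d>0. \<exists>e0 x0 r0. admissible n e0 x0 r0 \<and> state_norm n e0 x0 r0 < d \<and>
        (\<exists>T\<ge>0. \<exists>e x r. is_solution n F N \<alpha> \<beta> \<sigma> \<delta> T e x r \<and>
            (\<forall>i<n. e i 0 = e0 i \<and> x i 0 = x0 i \<and> r i 0 = r0 i) \<and>
            state_norm n (\<lambda>i. e i T) (\<lambda>i. x i T) (\<lambda>i. r i T) \<ge> \<epsilon>))"

end

theory Submission
  imports Defs
begin


lemma lip_cont:
  fixes f :: "real \<Rightarrow> real"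
  assumes "0 \<le> C" "\<And>t t'. t \<in> S \<Longrightarrow> t' \<in> S \<Longrightarrow> \<bar>f t - f t'\<bar> \<le> C * \<bar>t - t'\<bar>"
  shows "continuous_on S f"
  by (rule lipschitz_on_continuous_on[of C]) (rule lipschitz_onI, use assms in \<open>auto simp: dist_real_def\<close>)

lemma comp_lip:
  fixes G :: "(nat \<Rightarrow> real) \<Rightarrow> nat \<Rightarrow> real"
  assumes L: "0 \<le> L" and K: "0 \<le> K"
    and lip: "\<And>v w i. i < m \<Longrightarrow> \<bar>G v i - G w i\<bar> \<le> L * (\<Sum>j<m. \<bar>v j - w j\<bar>)"
    and q: "\<forall>j<m. \<forall>t\<in>S. \<forall>t'\<in>S. \<bar>q j t - q j t'\<bar> \<le> K * \<bar>t - t'\<bar>"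
    and i: "i < m"
  shows "continuous_on S (\<lambda>s. G (\<lambda>j. q j s) i)"
proof (rule lip_cont[of "L * (m * K)"])
  show "0 \<le> L * (m * K)" using L K by simp
  fix t t' assume tt: "t \<in> S" "t' \<in> S"
  have "\<bar>G (\<lambda>j. q j t) i - G (\<lambda>j. q j t') i\<bar> \<le> L * (\<Sum>j<m. \<bar>q j t - q j t'\<bar>)"
    using lip[OF i] .
  also have "\<dots> \<le> L * (\<Sum>j<m. K * \<bar>t - t'\<bar>)"
    using q tt by (intro mult_left_mono[OF sum_mono L]) auto
  also have "\<dots> = L * (m * K) * \<bar>t - t'\<bar>" by simp
  finally show "\<bar>G (\<lambda>j. q j t) i - G (\<lambda>j. q j t') i\<bar> \<le> L * (m * K) * \<bar>t - t'\<bar>" .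
qed

lemma int_lip:
  fixes g :: "real \<Rightarrow> real"
  assumes g: "continuous_on {0..T} g" and K: "\<And>s. s \<in> {0..T} \<Longrightarrow> \<bar>g s\<bar> \<le> K"
    and t: "t \<in> {0..T}" and t': "t' \<in> {0..T}" and K0: "0 \<le> K"
  shows "\<bar>integral {0..t} g - integral {0..t'} g\<bar> \<le> K * \<bar>t - t'\<bar>"
proof -
  have main: "\<bar>integral {0..b} g - integral {0..a} g\<bar> \<le> K * (b - a)"
    if ab: "a \<le> b" "a \<in> {0..T}" "b \<in> {0..T}" for a b
  proof -
    have ib: "g integrable_on {0..b}"
      using ab by (intro integrable_continuous_real continuous_on_subset[OF g]) auto
    have "integral {0..a} g + integral {a..b} g = integral {0..b} g"
      by (rule Henstock_Kurzweil_Integration.integral_combine) (use ab ib in auto)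
    then have eq: "integral {0..b} g - integral {0..a} g = integral {a..b} g" by simp
    have iab: "g integrable_on {a..b}"
      using ab by (intro integrable_continuous_real continuous_on_subset[OF g]) auto
    have "norm (integral {a..b} g) \<le> K * (b - a)"
      using has_integral_bound_real[OF K0 finite.emptyI, of g "integral {a..b} g" a b] iab ab K
      by (auto simp: integrable_integral)
    then show ?thesis using eq ab by simp
  qed
  show ?thesis
  proof (cases "t' \<le> t")
    case True then show ?thesis using main[of t' t] t t' by simp
  next
    case False then show ?thesis using main[of t t'] t t' by (simp add: abs_minus_commute)
  qed
qed

lemma poly_int:
  fixes C :: real and k :: nat
  assumes "0 \<le> t"
  shows "((\<lambda>s. C * s ^ Suc k / fact (Suc k)) has_integral (C * t ^ Suc (Suc k) / fact (Suc (Suc k)))) {0..t}"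
proof -
  have "((\<lambda>s. C * s ^ Suc k / fact (Suc k)) has_integral
        ((\<lambda>s. C * s ^ Suc (Suc k) / fact (Suc (Suc k))) t - (\<lambda>s. C * s ^ Suc (Suc k) / fact (Suc (Suc k))) 0)) {0..t}"
  proof (rule fundamental_theorem_of_calculus[OF assms])
    fix x :: real
    have "((\<lambda>s. C * s ^ Suc (Suc k) / fact (Suc (Suc k))) has_real_derivative
           C * (real (Suc (Suc k)) * x ^ Suc k) / fact (Suc (Suc k))) (at x within {0..t})"
      by (intro derivative_eq_intros) auto
    moreover have "C * (real (Suc (Suc k)) * x ^ Suc k) / fact (Suc (Suc k)) = C * x ^ Suc k / fact (Suc k)"
    proof -
      have f: "(fact (Suc (Suc k)) :: real) = real (Suc (Suc k)) * fact (Suc k)"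
        by (rule fact_Suc)
      have "(fact (Suc k) :: real) > 0" by simp
      then show ?thesis unfolding f by (simp add: field_simps del: of_nat_Suc fact_Suc)
    qed
    ultimately show "((\<lambda>s. C * s ^ Suc (Suc k) / fact (Suc (Suc k))) has_vector_derivative C * x ^ Suc k / fact (Suc k)) (at x within {0..t})"
      by (simp add: has_real_derivative_iff_has_vector_derivative)
  qed
  then show ?thesis by simp
qed

lemma ode_exists:
  fixes G :: "(nat \<Rightarrow> real) \<Rightarrow> nat \<Rightarrow> real" and z0 :: "nat \<Rightarrow> real"
  assumes L: "0 \<le> L" and K: "0 \<le> K" and T: "0 \<le> T"
    and lip: "\<And>v w i. i < m \<Longrightarrow> \<bar>G v i - G w i\<bar> \<le> L * (\<Sum>j<m. \<bar>v j - w j\<bar>)"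
    and bnd: "\<And>v i. i < m \<Longrightarrow> \<bar>G v i\<bar> \<le> K"
  shows "\<exists>z. (\<forall>i<m. z i 0 = z0 i) \<and>
    (\<forall>i<m. \<forall>t\<in>{0..T}. (z i has_real_derivative G (\<lambda>j. z j t) i) (at t within {0..T})) \<and>
    (\<forall>i<m. \<forall>t\<in>{0..T}. \<forall>t'\<in>{0..T}. \<bar>z i t - z i t'\<bar> \<le> K * \<bar>t - t'\<bar>)"
proof -
  define p :: "nat \<Rightarrow> nat \<Rightarrow> real \<Rightarrow> real" where
    "p = rec_nat (\<lambda>i t. z0 i) (\<lambda>k q i t. z0 i + integral {0..t} (\<lambda>s. G (\<lambda>j. q j s) i))"
  have p0: "\<And>i t. p 0 i t = z0 i" by (simp add: p_def)
  have pS: "\<And>k i t. p (Suc k) i t = z0 i + integral {0..t} (\<lambda>s. G (\<lambda>j. p k j s) i)"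
    by (simp add: p_def)
  have plip: "\<forall>j<m. \<forall>t\<in>{0..T}. \<forall>t'\<in>{0..T}. \<bar>p k j t - p k j t'\<bar> \<le> K * \<bar>t - t'\<bar>" for k
  proof (induction k)
    case 0 then show ?case using K by (simp add: p0)
  next
    case (Suc k)
    show ?case
    proof (intro allI impI ballI)
      fix j t t' assume j: "j < m" and tt: "t \<in> {0..T}" "t' \<in> {0..T}"
      have c: "continuous_on {0..T} (\<lambda>s. G (\<lambda>j. p k j s) j)"
        by (rule comp_lip[OF L K lip Suc j])
      show "\<bar>p (Suc k) j t - p (Suc k) j t'\<bar> \<le> K * \<bar>t - t'\<bar>"
        unfolding pS using int_lip[OF c bnd[OF j] tt K] by simp
    qed
  qed
  have pcont: "continuous_on {0..T} (\<lambda>s. G (\<lambda>j. p k j s) i)" if "i < m" for k i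
    by (rule comp_lip[OF L K lip plip that])
  have pint: "(\<lambda>s. G (\<lambda>j. p k j s) i) integrable_on {0..t}" if "i < m" "t \<in> {0..T}" for k i t
    using that by (intro integrable_continuous_real continuous_on_subset[OF pcont]) auto
  define M where "M = L * m"
  have M0: "0 \<le> M" using L by (simp add: M_def)
  have pdiff: "\<forall>i<m. \<forall>t\<in>{0..T}. \<bar>p (Suc k) i t - p k i t\<bar> \<le> K * M ^ k * t ^ Suc k / fact (Suc k)" for k
  proof (induction k)
    case 0
    show ?case
    proof (intro allI impI ballI)
      fix i t assume i: "i < m" and t: "t \<in> {0..T}"
      have "\<bar>t * G z0 i\<bar> \<le> K * t"
        using bnd[OF i, of z0] t by (simp add: abs_mult) (metis mult.commute mult_right_mono)
      then show "\<bar>p (Suc 0) i t - p 0 i t\<bar> \<le> K * M ^ 0 * t ^ Suc 0 / fact (Suc 0)"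
        using t by (simp add: pS p0)
    qed
  next
    case (Suc k)
    show ?case
    proof (intro allI impI ballI)
      fix i t assume i: "i < m" and t: "t \<in> {0..T}"
      have "p (Suc (Suc k)) i t - p (Suc k) i t =
            integral {0..t} (\<lambda>s. G (\<lambda>j. p (Suc k) j s) i - G (\<lambda>j. p k j s) i)"
        using integral_diff[OF pint[OF i t, of "Suc k"] pint[OF i t, of k]]
        by (simp only: pS[of "Suc k" i t] pS[of k i t])
      also have "norm \<dots> \<le> integral {0..t} (\<lambda>s. (K * M ^ Suc k) * s ^ Suc k / fact (Suc k))"
      proof (rule integral_norm_bound_integral)
        show "(\<lambda>s. G (\<lambda>j. p (Suc k) j s) i - G (\<lambda>j. p k j s) i) integrable_on {0..t}"
          using pint[OF i t] by (intro integrable_diff) auto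
        show "(\<lambda>s. K * M ^ Suc k * s ^ Suc k / fact (Suc k)) integrable_on {0..t}"
          by (rule has_integral_integrable[OF poly_int[of t "K * M ^ Suc k" k]]) (use t in simp)
        fix s assume s: "s \<in> {0..t}"
        then have s': "s \<in> {0..T}" using t by auto
        have "\<bar>G (\<lambda>j. p (Suc k) j s) i - G (\<lambda>j. p k j s) i\<bar> \<le> L * (\<Sum>j<m. \<bar>p (Suc k) j s - p k j s\<bar>)"
          using lip[OF i] .
        also have "\<dots> \<le> L * (\<Sum>j<m. K * M ^ k * s ^ Suc k / fact (Suc k))"
          using Suc.IH s' by (intro mult_left_mono[OF sum_mono L]) auto
        also have "\<dots> = K * M ^ Suc k * s ^ Suc k / fact (Suc k)"
          by (simp add: M_def)
        finally show "norm (G (\<lambda>j. p (Suc k) j s) i - G (\<lambda>j. p k j s) i) \<le> K * M ^ Suc k * s ^ Suc k / fact (Suc k)"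
          by simp
      qed
      also have "\<dots> = K * M ^ Suc k * t ^ Suc (Suc k) / fact (Suc (Suc k))"
        by (rule integral_unique[OF poly_int[of t "K * M ^ Suc k" k]]) (use t in simp)
      finally show "\<bar>p (Suc (Suc k)) i t - p (Suc k) i t\<bar> \<le> K * M ^ Suc k * t ^ Suc (Suc k) / fact (Suc (Suc k))"
        by simp
    qed
  qed
  define z where "z i t = z0 i + (\<Sum>k. p (Suc k) i t - p k i t)" for i t
  have conv: "(\<lambda>k. p k i t) \<longlonglongrightarrow> z i t" if i: "i < m" and t: "t \<in> {0..T}" for i t
  proof -
    have b: "norm (p (Suc k) i t - p k i t) \<le> K * T * (inverse (fact k) * (M * T) ^ k)" for k
    proof -
      have "\<bar>p (Suc k) i t - p k i t\<bar> \<le> K * M ^ k * t ^ Suc k / fact (Suc k)"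
        using pdiff i t by blast
      also have "\<dots> \<le> K * M ^ k * T ^ Suc k / fact k"
      proof (rule frac_le)
        show "0 \<le> K * M ^ k * T ^ Suc k" using K M0 T by simp
        show "K * M ^ k * t ^ Suc k \<le> K * M ^ k * T ^ Suc k"
          using K M0 t by (intro mult_left_mono power_mono) auto
        show "0 < (fact k :: real)" by simp
        show "(fact k :: real) \<le> fact (Suc k)" by (rule fact_mono) simp
      qed
      also have "\<dots> = K * T * (inverse (fact k) * (M * T) ^ k)"
        by (simp add: field_simps power_mult_distrib)
      finally show ?thesis by simp
    qed
    have "summable (\<lambda>k. K * T * (inverse (fact k) * (M * T) ^ k))"
      by (intro summable_mult summable_exp)
    then have sm: "summable (\<lambda>k. p (Suc k) i t - p k i t)"
      by (rule summable_comparison_test[rotated]) (use b in auto)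
    have "(\<lambda>k. z0 i + (\<Sum>j<k. p (Suc j) i t - p j i t)) \<longlonglongrightarrow> z0 i + (\<Sum>k. p (Suc k) i t - p k i t)"
      by (intro tendsto_add tendsto_const summable_LIMSEQ sm)
    moreover have "(\<lambda>k. z0 i + (\<Sum>j<k. p (Suc j) i t - p j i t)) = (\<lambda>k. p k i t)"
      by (rule ext, subst sum_lessThan_telescope) (simp add: p0)
    ultimately show ?thesis by (simp add: z_def)
  qed
  have zlip: "\<forall>i<m. \<forall>t\<in>{0..T}. \<forall>t'\<in>{0..T}. \<bar>z i t - z i t'\<bar> \<le> K * \<bar>t - t'\<bar>"
  proof (intro allI impI ballI)
    fix i t t' assume i: "i < m" and tt: "t \<in> {0..T}" "t' \<in> {0..T}"
    have "(\<lambda>k. \<bar>p k i t - p k i t'\<bar>) \<longlonglongrightarrow> \<bar>z i t - z i t'\<bar>"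
      by (intro tendsto_rabs tendsto_diff conv i tt)
    then show "\<bar>z i t - z i t'\<bar> \<le> K * \<bar>t - t'\<bar>"
      by (rule LIMSEQ_le_const2) (use plip i tt in auto)
  qed
  have z0': "z i 0 = z0 i" if i: "i < m" for i
  proof -
    have "(\<lambda>k. p k i 0) \<longlonglongrightarrow> z i 0" using conv[OF i] T by auto
    moreover have "(\<lambda>k. p k i 0) = (\<lambda>k. z0 i)"
    proof
      fix k show "p k i 0 = z0 i" by (cases k) (simp_all add: p0 pS)
    qed
    ultimately show ?thesis using LIMSEQ_unique by auto
  qed
  have zcont: "continuous_on {0..T} (\<lambda>s. G (\<lambda>j. z j s) i)" if "i < m" for i
    by (rule comp_lip[OF L K lip zlip that])
  have zeq: "z i t = z0 i + integral {0..t} (\<lambda>s. G (\<lambda>j. z j s) i)" if i: "i < m" and t: "t \<in> {0..T}" for i t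
  proof -
    have "(\<lambda>k. integral {0..t} (\<lambda>s. G (\<lambda>j. p k j s) i)) \<longlonglongrightarrow> integral {0..t} (\<lambda>s. G (\<lambda>j. z j s) i)"
    proof (rule dominated_convergence(2))
      show "(\<lambda>s. G (\<lambda>j. p k j s) i) integrable_on {0..t}" for k using pint[OF i t] .
      show "(\<lambda>s. K) integrable_on {0..t}" by (rule integrable_continuous_real) simp
      show "norm (G (\<lambda>j. p k j s) i) \<le> K" for k s using bnd[OF i] by simp
      fix s assume s: "s \<in> {0..t}"
      then have s': "s \<in> {0..T}" using t by auto
      have "(\<lambda>k. G (\<lambda>j. p k j s) i - G (\<lambda>j. z j s) i) \<longlonglongrightarrow> 0"
      proof (rule Lim_null_comparison)
        show "\<forall>\<^sub>F k in sequentially. norm (G (\<lambda>j. p k j s) i - G (\<lambda>j. z j s) i) \<le> L * (\<Sum>j<m. \<bar>p k j s - z j s\<bar>)"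
          using lip[OF i] by simp
        have "(\<lambda>k. L * (\<Sum>j<m. \<bar>p k j s - z j s\<bar>)) \<longlonglongrightarrow> L * (\<Sum>j<m. \<bar>z j s - z j s\<bar>)"
          by (intro tendsto_mult tendsto_const tendsto_sum tendsto_rabs tendsto_diff conv s') auto
        then show "(\<lambda>k. L * (\<Sum>j<m. \<bar>p k j s - z j s\<bar>)) \<longlonglongrightarrow> 0" by simp
      qed
      then show "(\<lambda>k. G (\<lambda>j. p k j s) i) \<longlonglongrightarrow> G (\<lambda>j. z j s) i" by (rule LIM_zero_cancel)
    qed
    then have "(\<lambda>k. p (Suc k) i t) \<longlonglongrightarrow> z0 i + integral {0..t} (\<lambda>s. G (\<lambda>j. z j s) i)"
      unfolding pS by (intro tendsto_add tendsto_const)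
    moreover have "(\<lambda>k. p (Suc k) i t) \<longlonglongrightarrow> z i t"
      using conv[OF i t] by (rule LIMSEQ_Suc)
    ultimately show ?thesis using LIMSEQ_unique by auto
  qed
  have deriv: "(z i has_real_derivative G (\<lambda>j. z j t) i) (at t within {0..T})"
    if i: "i < m" and t: "t \<in> {0..T}" for i t
  proof -
    have "((\<lambda>x. z0 i + integral {0..x} (\<lambda>s. G (\<lambda>j. z j s) i)) has_real_derivative G (\<lambda>j. z j t) i) (at t within {0..T})"
      using integral_has_real_derivative[OF zcont[OF i] t] by (intro derivative_eq_intros) auto
    then show ?thesis
      by (rule has_field_derivative_transform_within[of _ _ _ _ 1]) (use t zeq[OF i] in auto)
  qed
  show ?thesis using z0' deriv zlip by blast
qed



lemma abs_trick:
  fixes a :: "nat \<Rightarrow> nat \<Rightarrow> real" and w :: "nat \<Rightarrow> complex"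
  assumes metz: "\<forall>i<k. \<forall>j<k. i \<noteq> j \<longrightarrow> a j i \<ge> 0"
    and eq: "\<forall>i<k. (\<Sum>j<k. of_real (a j i) * w j) = \<nu> * w i"
    and i: "i < k"
  shows "(\<Sum>j<k. a j i * cmod (w j)) \<ge> Re \<nu> * cmod (w i)"
proof -
  define c where "c = \<bar>a i i\<bar>"
  define b where "b j = a j i + (if j = i then c else 0)" for j
  have bnn: "b j \<ge> 0" if "j < k" for j
    using metz i that by (cases "j = i") (auto simp: b_def c_def)
  have "(\<Sum>j<k. of_real (b j) * w j) = (\<Sum>j<k. of_real (a j i) * w j) + (\<Sum>j<k. (if j = i then of_real c * w j else 0))"
  proof -
    have "(\<Sum>j<k. of_real (b j) * w j) = (\<Sum>j<k. of_real (a j i) * w j + (if j = i then of_real c * w j else 0))"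
      by (intro sum.cong refl) (simp add: b_def distrib_right)
    then show ?thesis by (simp add: sum.distrib)
  qed
  also have "\<dots> = (\<nu> + of_real c) * w i"
    using eq i by (simp add: distrib_right)
  finally have e1: "(\<Sum>j<k. of_real (b j) * w j) = (\<nu> + of_real c) * w i" .
  have "(Re \<nu> + c) * cmod (w i) \<le> cmod (\<nu> + of_real c) * cmod (w i)"
    by (intro mult_right_mono) (use abs_Re_le_cmod[of "\<nu> + of_real c"] in auto)
  also have "\<dots> = cmod (\<Sum>j<k. of_real (b j) * w j)" by (simp add: e1 norm_mult)
  also have "\<dots> \<le> (\<Sum>j<k. cmod (of_real (b j) * w j))" by (rule norm_sum)
  also have "\<dots> = (\<Sum>j<k. b j * cmod (w j))"
    by (intro sum.cong refl) (simp add: norm_mult bnn)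
  also have "\<dots> = (\<Sum>j<k. a j i * cmod (w j)) + c * cmod (w i)"
  proof -
    have "(\<Sum>j<k. b j * cmod (w j)) = (\<Sum>j<k. a j i * cmod (w j) + (if j = i then c * cmod (w j) else 0))"
      by (intro sum.cong refl) (simp add: b_def distrib_right)
    then show ?thesis using i by (simp add: sum.distrib)
  qed
  finally show ?thesis by (simp add: algebra_simps)
qed

lemma metzler_subeig:
  fixes A :: "real mat"
  assumes A: "A \<in> carrier_mat k k" and k: "k > 0"
    and metz: "\<forall>i<k. \<forall>j<k. i \<noteq> j \<longrightarrow> A $$ (i,j) \<ge> 0"
    and sa: "spectral_abscissa A > 0"
  shows "\<exists>u \<mu>. \<mu> > 0 \<and> (\<forall>i<k. u i \<ge> 0) \<and> (\<exists>i<k. u i > 0) \<and>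
     (\<forall>i<k. (\<Sum>j<k. A $$ (j,i) * u j) \<ge> \<mu> * u i)"
proof -
  define C where "C = map_mat complex_of_real A"
  have C: "C \<in> carrier_mat k k" using A by (simp add: C_def)
  have fin: "finite (spectrum C)" using card_finite_spectrum(1)[OF C] .
  have ne: "spectrum C \<noteq> {}" using spectrum_non_empty[OF C k] .
  have "spectral_abscissa A \<in> Re ` spectrum C"
    unfolding spectral_abscissa_def C_def[symmetric] using fin ne by (intro Max_in) auto
  then obtain \<nu> where \<nu>: "\<nu> \<in> spectrum C" and re: "Re \<nu> = spectral_abscissa A" by auto
  have CT: "transpose_mat C \<in> carrier_mat k k" using C by simp
  have "eigenvalue (transpose_mat C) \<nu>"
    using \<nu> unfolding spectrum_def eigenvalue_root_char_poly[OF CT] char_poly_transpose_mat[OF C]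
      eigenvalue_root_char_poly[OF C, symmetric] by simp
  then obtain w where ev: "eigenvector (transpose_mat C) w \<nu>" unfolding eigenvalue_def by blast
  then have w: "w \<in> carrier_vec k" "w \<noteq> 0\<^sub>v k" "transpose_mat C *\<^sub>v w = \<nu> \<cdot>\<^sub>v w"
    unfolding eigenvector_def using CT by auto
  have eq: "\<forall>i<k. (\<Sum>j<k. of_real (A $$ (j,i)) * w $ j) = \<nu> * w $ i"
  proof (intro allI impI)
    fix i assume i: "i < k"
    have "(transpose_mat C *\<^sub>v w) $ i = (\<nu> \<cdot>\<^sub>v w) $ i" using w(3) by simp
    then show "(\<Sum>j<k. of_real (A $$ (j,i)) * w $ j) = \<nu> * w $ i"
      using i C A w(1) by (simp add: scalar_prod_def C_def lessThan_atLeast0)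
  qed
  obtain i0 where i0: "i0 < k" "w $ i0 \<noteq> 0"
    using w(1,2) by (metis carrier_vecD eq_vecI index_zero_vec(1,2))
  define u where "u j = cmod (w $ j)" for j
  have "\<forall>i<k. (\<Sum>j<k. A $$ (j,i) * u j) \<ge> Re \<nu> * u i"
    unfolding u_def using abs_trick[of k "\<lambda>j i. A $$ (j,i)" "\<lambda>j. w $ j" \<nu>] metz eq by auto
  then show ?thesis using re sa i0 by (intro exI[of _ u] exI[of _ "Re \<nu>"]) (auto simp: u_def)
qed



lemma sum_split2: "(\<Sum>j<2*n. (f j :: real)) = (\<Sum>j<n. f j) + (\<Sum>j<n. f (n + j))" for n :: nat
proof -
  have e: "{..<2*n} = {..<n} \<union> {n..<n+n}" by auto
  have "(\<Sum>j<2*n. f j) = (\<Sum>j<n. f j) + (\<Sum>j\<in>{n..<n+n}. f j)"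
    unfolding e by (rule sum.union_disjoint) auto
  also have "(\<Sum>j\<in>{n..<n+n}. f j) = (\<Sum>j<n. f (n + j))"
    by (subst sum.shift_bounds_nat_ivl[of f 0 n n, simplified]) (simp add: lessThan_atLeast0 add.commute)
  finally show ?thesis .
qed

locale seirs =
  fixes n :: nat and F :: "nat \<Rightarrow> nat \<Rightarrow> real" and N \<alpha> \<beta> \<sigma> \<delta> :: "nat \<Rightarrow> real"
  assumes npos: "n > 0"
    and Npos: "\<forall>i<n. N i > 0"
    and Fnn: "\<forall>i<n. \<forall>j<n. F i j \<ge> 0"
    and pos: "\<forall>i<n. \<alpha> i > 0 \<and> \<beta> i > 0 \<and> \<sigma> i > 0 \<and> \<delta> i > 0"
begin

abbreviation "U \<equiv> Umat n F N \<beta> \<sigma> \<delta>"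

lemma gam_nn: "i < n \<Longrightarrow> gam n F N i \<ge> 0"
  unfolding gam_def using Npos Fnn by (intro divide_nonneg_pos sum_nonneg) auto

lemma Phi_nn: "i < n \<Longrightarrow> j < n \<Longrightarrow> Phi n F N i j \<ge> 0"
  unfolding Phi_def wgt_def using Npos Fnn gam_nn[of j]
  by (auto intro!: mult_nonneg_nonneg divide_nonneg_nonneg sum_nonneg)

lemma U_carrier: "U \<in> carrier_mat (2*n) (2*n)" by (simp add: Umat_def)

lemma U_ee: "i < n \<Longrightarrow> j < n \<Longrightarrow> U $$ (i,j) = (if i = j then - \<sigma> i - gam n F N i else 0) + Phi n F N i j"
  by (simp add: Umat_def)
lemma U_ex: "i < n \<Longrightarrow> j < n \<Longrightarrow> U $$ (i,n+j) = (if j = i then \<beta> i else 0)"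
  by (simp add: Umat_def)
lemma U_xe: "i < n \<Longrightarrow> j < n \<Longrightarrow> U $$ (n+i,j) = (if i = j then \<sigma> j else 0)"
  by (simp add: Umat_def)
lemma U_xx: "i < n \<Longrightarrow> j < n \<Longrightarrow> U $$ (n+i,n+j) = (if i = j then - \<delta> i - gam n F N i else 0) + Phi n F N i j"
  by (simp add: Umat_def)

lemma U_metz: "\<forall>i<2*n. \<forall>j<2*n. i \<noteq> j \<longrightarrow> U $$ (i,j) \<ge> 0"
proof (intro allI impI)
  fix i j assume ij: "i < 2*n" "j < 2*n" "i \<noteq> j"
  show "U $$ (i,j) \<ge> 0"
  proof (cases "i < n")
    case True
    show ?thesis
    proof (cases "j < n")
      case True then show ?thesis using \<open>i<n\<close> ij U_ee Phi_nn by simp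
    next
      case False
      then obtain j' where "j = n + j'" "j' < n" using ij by (metis add_diff_inverse_nat add_less_imp_less_left mult_2)
      then show ?thesis using \<open>i<n\<close> U_ex pos by auto
    qed
  next
    case False
    then obtain i' where i': "i = n + i'" "i' < n" using ij by (metis add_diff_inverse_nat add_less_imp_less_left mult_2)
    show ?thesis
    proof (cases "j < n")
      case True then show ?thesis using i' U_xe pos by auto
    next
      case False
      then obtain j' where "j = n + j'" "j' < n" using ij by (metis add_diff_inverse_nat add_less_imp_less_left mult_2)
      then show ?thesis using i' ij U_xx Phi_nn by auto
    qed
  qed
qed

lemma rowsum_e:
  assumes i: "i < n"
  shows "(\<Sum>j<2*n. U $$ (i,j) * v j) = (- \<sigma> i - gam n F N i) * v i + (\<Sum>j<n. Phi n F N i j * v j) + \<beta> i * v (n+i)"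
proof -
  have "(\<Sum>j<n. U $$ (i,j) * v j) = (\<Sum>j<n. (if i = j then (- \<sigma> i - gam n F N i) * v j else 0) + Phi n F N i j * v j)"
    by (intro sum.cong refl) (simp add: U_ee i distrib_right)
  also have "\<dots> = (- \<sigma> i - gam n F N i) * v i + (\<Sum>j<n. Phi n F N i j * v j)"
    using i by (simp add: sum.distrib)
  finally have 1: "(\<Sum>j<n. U $$ (i,j) * v j) = \<dots>" .
  have "(\<Sum>j<n. U $$ (i,n+j) * v (n+j)) = (\<Sum>j<n. if j = i then \<beta> i * v (n+j) else 0)"
    by (intro sum.cong refl) (simp add: U_ex i)
  also have "\<dots> = \<beta> i * v (n+i)" using i by simp
  finally show ?thesis using 1 by (simp add: sum_split2)
qed

lemma rowsum_x:
  assumes i: "i < n"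
  shows "(\<Sum>j<2*n. U $$ (n+i,j) * v j) = \<sigma> i * v i + (- \<delta> i - gam n F N i) * v (n+i) + (\<Sum>j<n. Phi n F N i j * v (n+j))"
proof -
  have "(\<Sum>j<n. U $$ (n+i,j) * v j) = (\<Sum>j<n. if j = i then \<sigma> i * v j else 0)"
    by (intro sum.cong refl) (auto simp: U_xe i)
  also have "\<dots> = \<sigma> i * v i" using i by simp
  finally have 1: "(\<Sum>j<n. U $$ (n+i,j) * v j) = \<sigma> i * v i" .
  have "(\<Sum>j<n. U $$ (n+i,n+j) * v (n+j)) = (\<Sum>j<n. (if i = j then (- \<delta> i - gam n F N i) * v (n+j) else 0) + Phi n F N i j * v (n+j))"
    by (intro sum.cong refl) (simp add: U_xx i distrib_right)
  also have "\<dots> = (- \<delta> i - gam n F N i) * v (n+i) + (\<Sum>j<n. Phi n F N i j * v (n+j))"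
    using i by (simp add: sum.distrib)
  finally show ?thesis using 1 by (simp add: sum_split2)
qed

end


context seirs begin

definition Rv :: "(nat \<Rightarrow> real) \<Rightarrow> nat \<Rightarrow> real" where
  "Rv v k = (if k < n then rhs_e n F N \<beta> \<sigma> (\<lambda>i. v i) (\<lambda>i. v (n+i)) (\<lambda>i. v (2*n+i)) k
     else if k < 2*n then rhs_x n F N \<sigma> \<delta> (\<lambda>i. v i) (\<lambda>i. v (n+i)) (k-n)
     else if k < 3*n then rhs_r n F N \<alpha> \<delta> (\<lambda>i. v (n+i)) (\<lambda>i. v (2*n+i)) (k - 2*n) else 0)"

lemma Rv_e: "k < n \<Longrightarrow> Rv v k = rhs_e n F N \<beta> \<sigma> (\<lambda>i. v i) (\<lambda>i. v (n+i)) (\<lambda>i. v (2*n+i)) k"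
  by (simp add: Rv_def)
lemma Rv_x: "k < n \<Longrightarrow> Rv v (n+k) = rhs_x n F N \<sigma> \<delta> (\<lambda>i. v i) (\<lambda>i. v (n+i)) k"
  by (simp add: Rv_def)
lemma Rv_r: "k < n \<Longrightarrow> Rv v (2*n+k) = rhs_r n F N \<alpha> \<delta> (\<lambda>i. v (n+i)) (\<lambda>i. v (2*n+i)) k"
  by (simp add: Rv_def)

lemma growth:
  fixes u v :: "nat \<Rightarrow> real"
  assumes u: "\<forall>k<2*n. u k \<ge> 0"
    and sub: "\<forall>i<2*n. (\<Sum>j<2*n. U $$ (j,i) * u j) \<ge> \<mu> * u i"
    and c: "\<forall>i<2*n. U $$ (i,i) + c \<ge> 0"
    and mu: "\<mu> > 0"
    and eta: "0 \<le> \<eta>" "\<eta> \<le> 1/2" "\<eta> * c \<le> \<mu> / 4"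
    and v: "\<forall>j<3*n. v j \<ge> 0"
    and s: "\<forall>i<n. v i + v (n+i) + v (2*n+i) \<le> \<eta>"
  shows "(\<Sum>k<2*n. u k * Rv v k) \<ge> \<mu> / 4 * (\<Sum>k<2*n. u k * v k)"
proof -
  define A where "A = (\<Sum>k<2*n. u k * (\<Sum>j<2*n. U $$ (k,j) * v j))"
  define W where "W = (\<Sum>k<2*n. u k * v k)"
  define Nl where "Nl = (\<Sum>i<n. u i * \<beta> i * v (n+i))"
  define Ns where "Ns = (\<Sum>i<n. u i * \<beta> i * v (n+i) * (v i + v (n+i) + v (2*n+i)))"
  have v2: "\<forall>j<2*n. v j \<ge> 0" using v by auto
  have W0: "W \<ge> 0" unfolding W_def using u v2 by (auto intro!: sum_nonneg)
  have eR: "(\<Sum>k<2*n. u k * Rv v k) = A - Ns"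
  proof -
    have e1: "u k * Rv v k = u k * (\<Sum>j<2*n. U $$ (k,j) * v j) - u k * \<beta> k * v (n+k) * (v k + v (n+k) + v (2*n+k))"
      if k: "k < n" for k
      unfolding Rv_e[OF k] rowsum_e[OF k] rhs_e_def by (simp add: algebra_simps)
    have e2: "u (n+k) * Rv v (n+k) = u (n+k) * (\<Sum>j<2*n. U $$ (n+k,j) * v j)" if k: "k < n" for k
      unfolding Rv_x[OF k] rowsum_x[OF k] rhs_x_def by (simp add: algebra_simps)
    have "(\<Sum>k<2*n. u k * Rv v k) = (\<Sum>k<n. u k * Rv v k) + (\<Sum>k<n. u (n+k) * Rv v (n+k))"
      by (rule sum_split2)
    also have "\<dots> = (\<Sum>k<n. u k * (\<Sum>j<2*n. U $$ (k,j) * v j) - u k * \<beta> k * v (n+k) * (v k + v (n+k) + v (2*n+k)))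
                   + (\<Sum>k<n. u (n+k) * (\<Sum>j<2*n. U $$ (n+k,j) * v j))"
      using e1 e2 by (intro arg_cong2[where f="(+)"] sum.cong) auto
    also have "\<dots> = A - Ns"
      unfolding A_def Ns_def sum_split2[of "\<lambda>k. u k * (\<Sum>j<2*n. U $$ (k,j) * v j)"]
      by (simp add: sum_subtractf)
    finally show ?thesis .
  qed
  have AmW: "A \<ge> \<mu> * W"
  proof -
    have "A = (\<Sum>j<2*n. v j * (\<Sum>k<2*n. U $$ (k,j) * u k))"
      unfolding A_def sum_distrib_left by (subst sum.swap) (simp add: algebra_simps)
    also have "\<dots> \<ge> (\<Sum>j<2*n. v j * (\<mu> * u j))"
      using sub v2 by (intro sum_mono mult_left_mono) auto
    finally show ?thesis unfolding W_def by (simp add: sum_distrib_left algebra_simps)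
  qed
  have inner: "(\<Sum>j<2*n. U $$ (k,j) * v j) + c * v k \<ge> (if k < n then \<beta> k * v (n+k) else 0)"
    if k: "k < 2*n" for k
  proof -
    define a where "a j = (U $$ (k,j) + (if j = k then c else 0)) * v j" for j
    have an: "a j \<ge> 0" if "j < 2*n" for j
      using U_metz c v2 k that unfolding a_def by (cases "j = k") auto
    have "(\<Sum>j<2*n. U $$ (k,j) * v j) + c * v k = (\<Sum>j<2*n. a j)"
    proof -
      have "(\<Sum>j<2*n. a j) = (\<Sum>j<2*n. U $$ (k,j) * v j + (if j = k then c * v j else 0))"
        by (intro sum.cong refl) (simp add: a_def distrib_right)
      then show ?thesis using k by (simp add: sum.distrib)
    qed
    moreover have "(\<Sum>j<2*n. a j) \<ge> (if k < n then \<beta> k * v (n+k) else 0)"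
    proof (cases "k < n")
      case True
      have "a (n+k) \<le> (\<Sum>j<2*n. a j)" using an True by (intro member_le_sum) auto
      moreover have "a (n+k) = \<beta> k * v (n+k)" using True U_ex[of k k] by (simp add: a_def)
      ultimately show ?thesis using True by simp
    next
      case False then show ?thesis using an by (auto intro!: sum_nonneg)
    qed
    ultimately show ?thesis by simp
  qed
  have NlA: "Nl \<le> A + c * W"
  proof -
    have "A + c * W = (\<Sum>k<2*n. u k * ((\<Sum>j<2*n. U $$ (k,j) * v j) + c * v k))"
      unfolding A_def W_def by (simp add: sum.distrib sum_distrib_left algebra_simps)
    also have "\<dots> \<ge> (\<Sum>k<2*n. u k * (if k < n then \<beta> k * v (n+k) else 0))"
      using u inner by (intro sum_mono mult_left_mono) auto
    also have "(\<Sum>k<2*n. u k * (if k < n then \<beta> k * v (n+k) else 0)) = Nl"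
      unfolding Nl_def sum_split2[of "\<lambda>k. u k * (if k < n then \<beta> k * v (n+k) else 0)"]
      by (simp add: algebra_simps)
    finally show ?thesis .
  qed
  have NsNl: "Ns \<le> \<eta> * Nl"
  proof -
    have "Ns \<le> (\<Sum>i<n. u i * \<beta> i * v (n+i) * \<eta>)"
      unfolding Ns_def
    proof (intro sum_mono mult_left_mono)
      fix i assume i: "i \<in> {..<n}"
      show "v i + v (n+i) + v (2*n+i) \<le> \<eta>" using s i by auto
      have "u i \<ge> 0" "\<beta> i \<ge> 0" "v (n+i) \<ge> 0" using u v pos i by (auto simp: less_imp_le)
      then show "0 \<le> u i * \<beta> i * v (n+i)" by simp
    qed
    then show ?thesis unfolding Nl_def by (simp add: sum_distrib_left algebra_simps)
  qed
  have muW: "\<mu> * W \<ge> 0" using mu W0 by simp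
  have s1: "\<eta> * Nl \<le> \<eta> * (A + c * W)" using NlA eta(1) by (rule mult_left_mono)
  have s2: "(1 - \<eta>) * (\<mu> * W) \<le> (1 - \<eta>) * A" using AmW eta(2) by (intro mult_left_mono) auto
  have s3: "\<eta> * c * W \<le> \<mu> / 4 * W" using eta(3) W0 by (rule mult_right_mono)
  have s4: "\<eta> * (\<mu> * W) \<le> 1/2 * (\<mu> * W)" using eta(2) muW by (rule mult_right_mono)
  have "(\<Sum>k<2*n. u k * Rv v k) \<ge> (1 - \<eta>) * A - \<eta> * c * W"
    using eR NsNl s1 by (simp add: algebra_simps)
  then show ?thesis using s2 s3 s4 unfolding W_def[symmetric] by (simp add: algebra_simps)
qed

end


definition clip :: "real \<Rightarrow> (nat \<Rightarrow> real) \<Rightarrow> nat \<Rightarrow> real" where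
  "clip b v j = max 0 (min b (v j))"

lemma clip_lip: "\<bar>clip b v j - clip b w j\<bar> \<le> \<bar>v j - w j\<bar>"
  unfolding clip_def by (auto simp: max_def min_def abs_if)

lemma clip_ge: "0 \<le> b \<Longrightarrow> 0 \<le> clip b v j" unfolding clip_def by simp
lemma clip_le: "0 \<le> b \<Longrightarrow> clip b v j \<le> b" unfolding clip_def by simp

lemma prod_lip:
  fixes x x' s s' :: real
  assumes "0 \<le> x" "x \<le> 1" "0 \<le> x'" "x' \<le> 1" "0 \<le> s" "s \<le> 1" "0 \<le> s'" "s' \<le> 1"
  shows "\<bar>x * (1 - s) - x' * (1 - s')\<bar> \<le> \<bar>x - x'\<bar> + \<bar>s - s'\<bar>"
proof -
  have e: "x * (1 - s) - x' * (1 - s') = (x - x') * (1 - s) + x' * (s' - s)" by (simp add: algebra_simps)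
  have "\<bar>(x - x') * (1 - s)\<bar> \<le> \<bar>x - x'\<bar>" using assms by (simp add: abs_mult mult_left_le)
  moreover have "\<bar>x' * (s' - s)\<bar> \<le> \<bar>s - s'\<bar>" using assms
    by (simp add: abs_mult abs_minus_commute mult_left_le_one_le)
  ultimately show ?thesis unfolding e by (smt (verit) abs_triangle_ineq)
qed

lemma wsum_lip:
  fixes a p q :: "nat \<Rightarrow> real"
  assumes "\<forall>j<n. a j \<ge> 0" "\<forall>j<n. \<bar>p j - q j\<bar> \<le> D"
  shows "\<bar>(\<Sum>j<n. a j * p j) - (\<Sum>j<n. a j * q j)\<bar> \<le> (\<Sum>j<n. a j) * D"
proof -
  have "\<bar>(\<Sum>j<n. a j * p j) - (\<Sum>j<n. a j * q j)\<bar> = \<bar>\<Sum>j<n. a j * (p j - q j)\<bar>"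
    by (simp add: sum_subtractf right_diff_distrib)
  also have "\<dots> \<le> (\<Sum>j<n. \<bar>a j * (p j - q j)\<bar>)" by (rule sum_abs)
  also have "\<dots> \<le> (\<Sum>j<n. a j * D)"
    using assms by (intro sum_mono) (simp add: abs_mult mult_left_mono)
  finally show ?thesis by (simp add: sum_distrib_right)
qed

lemma wsum_bnd:
  fixes a p :: "nat \<Rightarrow> real"
  assumes "\<forall>j<n. a j \<ge> 0" "\<forall>j<n. 0 \<le> p j \<and> p j \<le> 1"
  shows "0 \<le> (\<Sum>j<n. a j * p j)" "(\<Sum>j<n. a j * p j) \<le> (\<Sum>j<n. a j)"
  using assms by (auto intro!: sum_nonneg sum_mono mult_left_le)

context seirs begin

definition Gv :: "real \<Rightarrow> (nat \<Rightarrow> real) \<Rightarrow> nat \<Rightarrow> real" where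
  "Gv b v = Rv (clip b v)"

definition Cc :: real where
  "Cc = (\<Sum>i<n. \<alpha> i + \<beta> i + \<sigma> i + \<delta> i + gam n F N i + (\<Sum>j<n. Phi n F N i j))"

lemma coef_nn: assumes i: "i < n"
  shows "0 \<le> \<alpha> i \<and> 0 \<le> \<beta> i \<and> 0 \<le> \<sigma> i \<and> 0 \<le> \<delta> i \<and> 0 \<le> gam n F N i \<and> 0 \<le> (\<Sum>j<n. Phi n F N i j)"
proof -
  have "0 \<le> (\<Sum>j<n. Phi n F N i j)" using Phi_nn i by (intro sum_nonneg) auto
  then show ?thesis using pos gam_nn i by (simp add: less_imp_le)
qed

lemma Cc_ge: assumes i: "i < n"
  shows "\<alpha> i + \<beta> i + \<sigma> i + \<delta> i + gam n F N i + (\<Sum>j<n. Phi n F N i j) \<le> Cc"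
  unfolding Cc_def
proof (rule member_le_sum)
  fix x assume "x \<in> {..<n} - {i}"
  then show "0 \<le> \<alpha> x + \<beta> x + \<sigma> x + \<delta> x + gam n F N x + (\<Sum>j<n. Phi n F N x j)"
    using coef_nn[of x] by auto
qed (use i in auto)

lemma Cc_nn: "0 \<le> Cc"
  using Cc_ge[of 0] coef_nn[of 0] npos by linarith

lemma Rv_cong: assumes "\<forall>j<3*n. v j = w j" shows "Rv v k = Rv w k"
proof -
  have a: "\<And>j. j < n \<Longrightarrow> v j = w j" "\<And>j. j < n \<Longrightarrow> v (n+j) = w (n+j)" "\<And>j. j < n \<Longrightarrow> v (2*n+j) = w (2*n+j)"
    using assms by auto
  show ?thesis
    using assms by (auto simp: Rv_def rhs_e_def rhs_x_def rhs_r_def intro!: sum.cong)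
qed

end


lemma comb3:
  fixes a c X Y Z x y z :: real
  assumes "a \<ge> 0" "c \<ge> 0" "\<bar>X\<bar> \<le> x" "\<bar>Y\<bar> \<le> y" "\<bar>Z\<bar> \<le> z"
  shows "\<bar>a * X - c * Y + Z\<bar> \<le> a * x + c * y + z"
proof -
  have "\<bar>a * X\<bar> \<le> a * x" using assms by (simp add: abs_mult mult_left_mono)
  moreover have "\<bar>c * Y\<bar> \<le> c * y" using assms by (simp add: abs_mult mult_left_mono)
  ultimately show ?thesis using assms(5) by (smt (verit) abs_triangle_ineq abs_triangle_ineq4)
qed

lemma wsum_abs:
  fixes a p :: "nat \<Rightarrow> real"
  assumes "\<forall>j<n. a j \<ge> 0" "\<forall>j<n. 0 \<le> p j \<and> p j \<le> 1/3"
  shows "\<bar>\<Sum>j<n. a j * p j\<bar> \<le> (\<Sum>j<n. a j)" "0 \<le> (\<Sum>j<n. a j * p j)"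
proof -
  have "\<forall>j<n. 0 \<le> p j \<and> p j \<le> 1" using assms(2) by auto
  then have "0 \<le> (\<Sum>j<n. a j * p j)" "(\<Sum>j<n. a j * p j) \<le> (\<Sum>j<n. a j)"
    using wsum_bnd[of n a p] assms(1) by auto
  then show "\<bar>\<Sum>j<n. a j * p j\<bar> \<le> (\<Sum>j<n. a j)" "0 \<le> (\<Sum>j<n. a j * p j)" by auto
qed

context seirs begin

lemma nat3_cases:
  assumes "k < 3*n"
  obtains (e) "k < n" | (x) i where "i < n" "k = n + i" | (r) i where "i < n" "k = 2*n + i"
proof -
  consider "k < n" | "n \<le> k" "k < 2*n" | "2*n \<le> k" by linarith
  then show ?thesis
  proof cases
    case 1 then show ?thesis using that(1) by blast
  next
    case 2 then show ?thesis using that(2)[of "k - n"] by auto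
  next
    case 3 then show ?thesis using that(3)[of "k - 2*n"] assms by auto
  qed
qed

lemma Gv_lip:
  assumes b: "0 \<le> b" "b \<le> 1/3" and k: "k < 3*n"
  shows "\<bar>Gv b v k - Gv b w k\<bar> \<le> (6 * Cc) * (\<Sum>j<3*n. \<bar>v j - w j\<bar>)"
proof -
  define p where "p = clip b v"
  define q where "q = clip b w"
  define D where "D = (\<Sum>j<3*n. \<bar>v j - w j\<bar>)"
  have D0: "D \<ge> 0" unfolding D_def by (simp add: sum_nonneg)
  have pq: "\<bar>p j - q j\<bar> \<le> D" if "j < 3*n" for j
  proof -
    have "\<bar>p j - q j\<bar> \<le> \<bar>v j - w j\<bar>" unfolding p_def q_def by (rule clip_lip)
    also have "\<dots> \<le> D" unfolding D_def using that by (intro member_le_sum) auto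
    finally show ?thesis .
  qed
  have pr: "0 \<le> p j \<and> p j \<le> 1/3" "0 \<le> q j \<and> q j \<le> 1/3" for j
    unfolding p_def q_def using clip_ge[OF b(1)] clip_le[OF b(1)] b(2) by (meson order_trans)+
  have CD: "0 \<le> Cc * D" using Cc_nn D0 by simp
  have "\<bar>Rv p k - Rv q k\<bar> \<le> (6 * Cc) * D"
    using k
  proof (cases rule: nat3_cases)
    case e
    note cf = coef_nn[OF e] Cc_ge[OF e]
    have eq: "Rv p k - Rv q k = \<beta> k * (p (n+k) * (1 - (p k + p (n+k) + p (2*n+k))) - q (n+k) * (1 - (q k + q (n+k) + q (2*n+k))))
       - (\<sigma> k + gam n F N k) * (p k - q k) + ((\<Sum>j<n. Phi n F N k j * p j) - (\<Sum>j<n. Phi n F N k j * q j))"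
      unfolding Rv_e[OF e] rhs_e_def by (simp add: algebra_simps)
    have X: "\<bar>p (n+k) * (1 - (p k + p (n+k) + p (2*n+k))) - q (n+k) * (1 - (q k + q (n+k) + q (2*n+k)))\<bar> \<le> 4 * D"
    proof -
      have "\<bar>p (n+k) * (1 - (p k + p (n+k) + p (2*n+k))) - q (n+k) * (1 - (q k + q (n+k) + q (2*n+k)))\<bar>
          \<le> \<bar>p (n+k) - q (n+k)\<bar> + \<bar>(p k + p (n+k) + p (2*n+k)) - (q k + q (n+k) + q (2*n+k))\<bar>"
        by (rule prod_lip) (use pr[of k] pr[of "n+k"] pr[of "2*n+k"] in auto)
      also have "\<dots> \<le> D + (D + D + D)"
        using pq[of k] pq[of "n+k"] pq[of "2*n+k"] e by (intro add_mono) (auto simp: abs_triangle_ineq)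
      finally show ?thesis by simp
    qed
    have Z: "\<bar>(\<Sum>j<n. Phi n F N k j * p j) - (\<Sum>j<n. Phi n F N k j * q j)\<bar> \<le> (\<Sum>j<n. Phi n F N k j) * D"
      by (rule wsum_lip) (use Phi_nn e pq in auto)
    have "\<bar>Rv p k - Rv q k\<bar> \<le> \<beta> k * (4 * D) + (\<sigma> k + gam n F N k) * D + (\<Sum>j<n. Phi n F N k j) * D"
      unfolding eq by (rule comb3) (use cf X Z pq[of k] e in auto)
    also have "\<dots> \<le> (6 * Cc) * D"
    proof -
      have "\<beta> k * (4 * D) + (\<sigma> k + gam n F N k) * D + (\<Sum>j<n. Phi n F N k j) * D
          = (4 * \<beta> k + \<sigma> k + gam n F N k + (\<Sum>j<n. Phi n F N k j)) * D" by (simp add: algebra_simps)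
      also have "\<dots> \<le> (6 * Cc) * D" using cf D0 by (intro mult_right_mono) auto
      finally show ?thesis .
    qed
    finally show ?thesis .
  next
    case (x i)
    note cf = coef_nn[OF x(1)] Cc_ge[OF x(1)]
    have eq: "Rv p k - Rv q k = \<sigma> i * (p i - q i) - (\<delta> i + gam n F N i) * (p (n+i) - q (n+i))
       + ((\<Sum>j<n. Phi n F N i j * p (n+j)) - (\<Sum>j<n. Phi n F N i j * q (n+j)))"
      unfolding x(2) Rv_x[OF x(1)] rhs_x_def by (simp add: algebra_simps)
    have Z: "\<bar>(\<Sum>j<n. Phi n F N i j * p (n+j)) - (\<Sum>j<n. Phi n F N i j * q (n+j))\<bar> \<le> (\<Sum>j<n. Phi n F N i j) * D"
      by (rule wsum_lip[where p="\<lambda>j. p (n+j)" and q="\<lambda>j. q (n+j)"]) (use Phi_nn x pq in auto)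
    have "\<bar>Rv p k - Rv q k\<bar> \<le> \<sigma> i * D + (\<delta> i + gam n F N i) * D + (\<Sum>j<n. Phi n F N i j) * D"
      unfolding eq by (rule comb3) (use cf Z pq[of i] pq[of "n+i"] x in auto)
    also have "\<dots> = (\<sigma> i + \<delta> i + gam n F N i + (\<Sum>j<n. Phi n F N i j)) * D" by (simp add: algebra_simps)
    also have "\<dots> \<le> (6 * Cc) * D" using cf D0 by (intro mult_right_mono) auto
    finally show ?thesis .
  next
    case (r i)
    note cf = coef_nn[OF r(1)] Cc_ge[OF r(1)]
    have eq: "Rv p k - Rv q k = \<delta> i * (p (n+i) - q (n+i)) - (\<alpha> i + gam n F N i) * (p (2*n+i) - q (2*n+i))
       + ((\<Sum>j<n. Phi n F N i j * p (2*n+j)) - (\<Sum>j<n. Phi n F N i j * q (2*n+j)))"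
      unfolding r(2) Rv_r[OF r(1)] rhs_r_def by (simp add: algebra_simps)
    have Z: "\<bar>(\<Sum>j<n. Phi n F N i j * p (2*n+j)) - (\<Sum>j<n. Phi n F N i j * q (2*n+j))\<bar> \<le> (\<Sum>j<n. Phi n F N i j) * D"
      by (rule wsum_lip[where p="\<lambda>j. p (2*n+j)" and q="\<lambda>j. q (2*n+j)"]) (use Phi_nn r pq in auto)
    have "\<bar>Rv p k - Rv q k\<bar> \<le> \<delta> i * D + (\<alpha> i + gam n F N i) * D + (\<Sum>j<n. Phi n F N i j) * D"
      unfolding eq by (rule comb3) (use cf Z pq[of "n+i"] pq[of "2*n+i"] r in auto)
    also have "\<dots> = (\<delta> i + \<alpha> i + gam n F N i + (\<Sum>j<n. Phi n F N i j)) * D" by (simp add: algebra_simps)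
    also have "\<dots> \<le> (6 * Cc) * D" using cf D0 by (intro mult_right_mono) auto
    finally show ?thesis .
  qed
  then show ?thesis unfolding Gv_def p_def q_def D_def .
qed

lemma Gv_bnd:
  assumes b: "0 \<le> b" "b \<le> 1/3" and k: "k < 3*n"
  shows "\<bar>Gv b v k\<bar> \<le> Cc"
proof -
  define p where "p = clip b v"
  have pr: "0 \<le> p j \<and> p j \<le> 1/3" for j
    unfolding p_def using clip_ge[OF b(1)] clip_le[OF b(1)] b(2) by (meson order_trans)
  have "\<bar>Rv p k\<bar> \<le> Cc"
    using k
  proof (cases rule: nat3_cases)
    case e
    note cf = coef_nn[OF e] Cc_ge[OF e]
    have eq: "Rv p k = \<beta> k * (p (n+k) * (1 - (p k + p (n+k) + p (2*n+k)))) - (\<sigma> k + gam n F N k) * p k + (\<Sum>j<n. Phi n F N k j * p j)"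
      unfolding Rv_e[OF e] rhs_e_def by (simp add: algebra_simps)
    have X: "\<bar>p (n+k) * (1 - (p k + p (n+k) + p (2*n+k)))\<bar> \<le> 1"
    proof -
      have "0 \<le> 1 - (p k + p (n+k) + p (2*n+k))" "1 - (p k + p (n+k) + p (2*n+k)) \<le> 1"
        using pr[of k] pr[of "n+k"] pr[of "2*n+k"] by auto
      moreover have "0 \<le> p (n+k)" "p (n+k) \<le> 1" using pr[of "n+k"] by auto
      ultimately show ?thesis by (simp add: abs_mult mult_le_one)
    qed
    have Z: "\<bar>\<Sum>j<n. Phi n F N k j * p j\<bar> \<le> (\<Sum>j<n. Phi n F N k j)"
      by (rule wsum_abs(1)[of n "Phi n F N k" p]) (use Phi_nn e pr in auto)
    have "\<bar>Rv p k\<bar> \<le> \<beta> k * 1 + (\<sigma> k + gam n F N k) * 1 + (\<Sum>j<n. Phi n F N k j)"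
      unfolding eq by (rule comb3) (use cf X Z pr[of k] in auto)
    then show ?thesis using cf by (simp only: mult_1_right) linarith
  next
    case (x i)
    note cf = coef_nn[OF x(1)] Cc_ge[OF x(1)]
    have eq: "Rv p k = \<sigma> i * p i - (\<delta> i + gam n F N i) * p (n+i) + (\<Sum>j<n. Phi n F N i j * p (n+j))"
      unfolding x(2) Rv_x[OF x(1)] rhs_x_def by (simp add: algebra_simps)
    have Z: "\<bar>\<Sum>j<n. Phi n F N i j * p (n+j)\<bar> \<le> (\<Sum>j<n. Phi n F N i j)"
      by (rule wsum_abs(1)[of n "Phi n F N i" "\<lambda>j. p (n+j)"]) (use Phi_nn x pr in auto)
    have "\<bar>Rv p k\<bar> \<le> \<sigma> i * 1 + (\<delta> i + gam n F N i) * 1 + (\<Sum>j<n. Phi n F N i j)"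
      unfolding eq by (rule comb3) (use cf Z pr[of i] pr[of "n+i"] in auto)
    then show ?thesis using cf by (simp only: mult_1_right) linarith
  next
    case (r i)
    note cf = coef_nn[OF r(1)] Cc_ge[OF r(1)]
    have eq: "Rv p k = \<delta> i * p (n+i) - (\<alpha> i + gam n F N i) * p (2*n+i) + (\<Sum>j<n. Phi n F N i j * p (2*n+j))"
      unfolding r(2) Rv_r[OF r(1)] rhs_r_def by (simp add: algebra_simps)
    have Z: "\<bar>\<Sum>j<n. Phi n F N i j * p (2*n+j)\<bar> \<le> (\<Sum>j<n. Phi n F N i j)"
      by (rule wsum_abs(1)[of n "Phi n F N i" "\<lambda>j. p (2*n+j)"]) (use Phi_nn r pr in auto)
    have "\<bar>Rv p k\<bar> \<le> \<delta> i * 1 + (\<alpha> i + gam n F N i) * 1 + (\<Sum>j<n. Phi n F N i j)"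
      unfolding eq by (rule comb3) (use cf Z pr[of "n+i"] pr[of "2*n+i"] in auto)
    then show ?thesis using cf by (simp only: mult_1_right) linarith
  qed
  then show ?thesis unfolding Gv_def p_def .
qed

lemma Gv_nonneg:
  assumes b: "0 \<le> b" "b \<le> 1/3" and k: "k < 3*n" and vk: "v k < 0"
  shows "Gv b v k \<ge> 0"
proof -
  define p where "p = clip b v"
  have pr: "0 \<le> p j \<and> p j \<le> 1/3" for j
    unfolding p_def using clip_ge[OF b(1)] clip_le[OF b(1)] b(2) by (meson order_trans)
  have pk: "p k = 0" unfolding p_def clip_def using vk b by simp
  have "Rv p k \<ge> 0"
    using k
  proof (cases rule: nat3_cases)
    case e
    note cf = coef_nn[OF e]
    have eq: "Rv p k = \<beta> k * (p (n+k) * (1 - (p k + p (n+k) + p (2*n+k)))) - (\<sigma> k + gam n F N k) * p k + (\<Sum>j<n. Phi n F N k j * p j)"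
      unfolding Rv_e[OF e] rhs_e_def by (simp add: algebra_simps)
    have "0 \<le> 1 - (p k + p (n+k) + p (2*n+k))" using pr[of k] pr[of "n+k"] pr[of "2*n+k"] by auto
    then have X: "0 \<le> p (n+k) * (1 - (p k + p (n+k) + p (2*n+k)))" using pr[of "n+k"] by simp
    have Z: "0 \<le> (\<Sum>j<n. Phi n F N k j * p j)"
      by (rule wsum_abs(2)[of n "Phi n F N k" p]) (use Phi_nn e pr in auto)
    have "0 \<le> \<beta> k * (p (n+k) * (1 - (p k + p (n+k) + p (2*n+k))))" using X cf by simp
    then show ?thesis unfolding eq using Z pk by simp
  next
    case (x i)
    note cf = coef_nn[OF x(1)]
    have eq: "Rv p k = \<sigma> i * p i - (\<delta> i + gam n F N i) * p (n+i) + (\<Sum>j<n. Phi n F N i j * p (n+j))"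
      unfolding x(2) Rv_x[OF x(1)] rhs_x_def by (simp add: algebra_simps)
    have Z: "0 \<le> (\<Sum>j<n. Phi n F N i j * p (n+j))"
      by (rule wsum_abs(2)[of n "Phi n F N i" "\<lambda>j. p (n+j)"]) (use Phi_nn x pr in auto)
    show ?thesis unfolding eq using pk x(2) Z cf pr[of i] by simp
  next
    case (r i)
    note cf = coef_nn[OF r(1)]
    have eq: "Rv p k = \<delta> i * p (n+i) - (\<alpha> i + gam n F N i) * p (2*n+i) + (\<Sum>j<n. Phi n F N i j * p (2*n+j))"
      unfolding r(2) Rv_r[OF r(1)] rhs_r_def by (simp add: algebra_simps)
    have Z: "0 \<le> (\<Sum>j<n. Phi n F N i j * p (2*n+j))"
      by (rule wsum_abs(2)[of n "Phi n F N i" "\<lambda>j. p (2*n+j)"]) (use Phi_nn r pr in auto)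
    show ?thesis unfolding eq using pk r(2) Z cf pr[of "n+i"] by simp
  qed
  then show ?thesis unfolding Gv_def p_def .
qed

lemma Gv_box:
  assumes "\<forall>j<3*n. 0 \<le> v j \<and> v j \<le> b"
  shows "Gv b v k = Rv v k"
  unfolding Gv_def by (rule Rv_cong) (use assms in \<open>auto simp: clip_def\<close>)

end


lemma hderiv: "((\<lambda>x::real. (min x 0)^2) has_real_derivative 2 * min x 0) (at x)"
proof (cases "x = 0")
  case True
  have "((\<lambda>y::real. ((min y 0)^2 - (min 0 0)^2) / (y - 0)) \<longlongrightarrow> 0) (at 0)"
  proof (rule Lim_null_comparison)
    have "norm (((min y 0)^2 - (min 0 0)^2) / (y - 0)) \<le> \<bar>y\<bar>" for y :: real
    proof (cases "y < 0")
      case True then show ?thesis by (simp add: power2_eq_square)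
    next
      case False then show ?thesis by simp
    qed
    then show "\<forall>\<^sub>F y in at 0. norm (((min y 0)^2 - (min 0 0)^2) / (y - 0)) \<le> \<bar>y\<bar>"
      by (intro always_eventually allI)
    show "((\<lambda>y::real. \<bar>y\<bar>) \<longlongrightarrow> 0) (at 0)"
      using tendsto_rabs_zero[OF tendsto_ident_at[of "0::real" UNIV]] by simp
  qed
  then show ?thesis using True by (simp add: has_field_derivative_iff)
next
  case False
  show ?thesis
  proof (cases "x < 0")
    case True
    have "((\<lambda>x::real. x^2) has_real_derivative 2 * min x 0) (at x)"
      using True by (auto intro!: derivative_eq_intros)
    then show ?thesis
      by (rule has_field_derivative_transform_within_open[of _ _ _ "{..<0}"]) (use True in auto)
  next
    case nn: False
    have "((\<lambda>x::real. 0) has_real_derivative 2 * min x 0) (at x)" using nn by simp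
    then show ?thesis
      by (rule has_field_derivative_transform_within_open[of _ _ _ "{0<..}"]) (use nn False in auto)
  qed
qed

context seirs begin

lemma comp_le_norm:
  assumes j: "j < 3*n"
  shows "\<bar>v j\<bar> \<le> state_norm n (\<lambda>i. v i) (\<lambda>i. v (n+i)) (\<lambda>i. v (2*n+i))"
proof -
  have key: "\<bar>a\<bar> \<le> state_norm n (\<lambda>i. v i) (\<lambda>i. v (n+i)) (\<lambda>i. v (2*n+i))"
    if i: "i < n" and a: "a\<^sup>2 \<le> (v i)\<^sup>2 + (v (n+i))\<^sup>2 + (v (2*n+i))\<^sup>2" for i a
  proof -
    have "a\<^sup>2 \<le> (\<Sum>i<n. (v i)\<^sup>2 + (v (n+i))\<^sup>2 + (v (2*n+i))\<^sup>2)"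
      using a member_le_sum[of i "{..<n}" "\<lambda>i. (v i)\<^sup>2 + (v (n+i))\<^sup>2 + (v (2*n+i))\<^sup>2"] i by auto
    then have "sqrt (a\<^sup>2) \<le> sqrt (\<Sum>i<n. (v i)\<^sup>2 + (v (n+i))\<^sup>2 + (v (2*n+i))\<^sup>2)"
      by (rule real_sqrt_le_mono)
    then show ?thesis by (simp add: state_norm_def)
  qed
  show ?thesis using j
  proof (cases rule: nat3_cases)
    case e then show ?thesis by (intro key[of j]) auto
  next
    case (x i) then show ?thesis by (intro key[of i]) auto
  next
    case (r i) then show ?thesis by (intro key[of i]) auto
  qed
qed

lemma main:
  assumes sa: "spectral_abscissa U > 0"
  shows "healthy_unstable n F N \<alpha> \<beta> \<sigma> \<delta>"
proof -
  obtain u0 \<mu> where mu: "\<mu> > 0" and u0nn: "\<forall>i<2*n. u0 i \<ge> 0" and u0pos: "\<exists>i<2*n. u0 i > 0"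
    and u0sub: "\<forall>i<2*n. (\<Sum>j<2*n. U $$ (j,i) * u0 j) \<ge> \<mu> * u0 i"
    using metzler_subeig[OF U_carrier _ U_metz sa] npos by auto
  define S0 where "S0 = (\<Sum>i<2*n. u0 i)"
  obtain i0 where i0: "i0 < 2*n" "u0 i0 > 0" using u0pos by auto
  have "u0 i0 \<le> S0" unfolding S0_def using u0nn i0 by (intro member_le_sum) auto
  then have S0: "S0 > 0" using i0 by simp
  define u where "u i = u0 i / S0" for i
  have unn: "\<forall>i<2*n. u i \<ge> 0" using u0nn S0 by (simp add: u_def)
  have ule: "\<forall>i<2*n. u i \<le> 1"
  proof (intro allI impI)
    fix i assume "i < 2*n"
    then have "u0 i \<le> S0" unfolding S0_def using u0nn by (intro member_le_sum) auto
    then show "u i \<le> 1" using S0 by (simp add: u_def)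
  qed
  have ui0: "u i0 > 0" using i0 S0 by (simp add: u_def)
  have usub: "\<forall>i<2*n. (\<Sum>j<2*n. U $$ (j,i) * u j) \<ge> \<mu> * u i"
  proof (intro allI impI)
    fix i assume i: "i < 2*n"
    have "(\<Sum>j<2*n. U $$ (j,i) * u j) = (\<Sum>j<2*n. U $$ (j,i) * u0 j) / S0"
      by (simp add: u_def sum_divide_distrib)
    also have "\<dots> \<ge> \<mu> * u0 i / S0" using u0sub i S0 by (intro divide_right_mono) auto
    finally show "(\<Sum>j<2*n. U $$ (j,i) * u j) \<ge> \<mu> * u i" by (simp add: u_def)
  qed
  define c where "c = (\<Sum>i<2*n. \<bar>U $$ (i,i)\<bar>)"
  have c0: "c \<ge> 0" unfolding c_def by (simp add: sum_nonneg)
  have cU: "\<forall>i<2*n. U $$ (i,i) + c \<ge> 0"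
  proof (intro allI impI)
    fix i assume "i < 2*n"
    then have "\<bar>U $$ (i,i)\<bar> \<le> c" unfolding c_def by (intro member_le_sum) auto
    then show "U $$ (i,i) + c \<ge> 0" by linarith
  qed
  define \<eta> where "\<eta> = min (1/2) (\<mu> / (4 * (c + 1)))"
  have eta0: "\<eta> > 0" using mu c0 by (simp add: \<eta>_def)
  have eta1: "\<eta> \<le> 1/2" unfolding \<eta>_def by (rule min.cobounded1)
  have eta2: "\<eta> * c \<le> \<mu> / 4"
  proof -
    have "\<eta> * c \<le> \<mu> / (4 * (c + 1)) * c" using c0 by (intro mult_right_mono) (auto simp: \<eta>_def)
    also have "\<dots> \<le> \<mu> / 4" using mu c0 by (simp add: field_simps)
    finally show ?thesis .
  qed
  define \<kappa> where "\<kappa> = \<mu> / 4"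
  have kappa: "\<kappa> > 0" using mu by (simp add: \<kappa>_def)
  define b where "b = \<eta> / 3"
  have b0: "b > 0" "b \<le> 1/3" using eta0 eta1 by (auto simp: b_def)
  define eps where "eps = b / 2"
  have eps0: "eps > 0" using b0 by (simp add: eps_def)
  define K where "K = Cc + 1"
  have K0: "K > 0" using Cc_nn by (simp add: K_def)
  show ?thesis
    unfolding healthy_unstable_def
  proof (intro exI[of _ eps] conjI allI impI eps0)
    fix d :: real assume d: "d > 0"
    show "\<exists>e0 x0 r0. admissible n e0 x0 r0 \<and> state_norm n e0 x0 r0 < d \<and>
        (\<exists>T\<ge>0. \<exists>e x r. is_solution n F N \<alpha> \<beta> \<sigma> \<delta> T e x r \<and>
            (\<forall>i<n. e i 0 = e0 i \<and> x i 0 = x0 i \<and> r i 0 = r0 i) \<and>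
            eps \<le> state_norm n (\<lambda>i. e i T) (\<lambda>i. x i T) (\<lambda>i. r i T))"
    proof -
      define \<tau> where "\<tau> = min eps d / (2 * real n + 2)"
      have tau0: "\<tau> > 0" using eps0 d by (simp add: \<tau>_def)
      have tau1: "\<tau> \<le> eps"
      proof -
        have "\<tau> \<le> min eps d / 1" unfolding \<tau>_def using eps0 d by (intro divide_left_mono) auto
        then show ?thesis by simp
      qed
      have tau2: "\<tau> * (2 * real n + 2) \<le> d" unfolding \<tau>_def by simp
      define z0 where "z0 j = (if j < 2*n then \<tau> * u j else 0)" for j
      have z0r: "0 \<le> z0 j \<and> z0 j \<le> \<tau>" for j
        using unn ule tau0 by (auto simp: z0_def mult_left_le)
      define W0 where "W0 = (\<Sum>k<2*n. u k * z0 k)"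
      have W0: "W0 > 0"
      proof -
        have "u i0 * z0 i0 \<le> W0" unfolding W0_def using unn z0r i0
          by (intro member_le_sum) (auto intro: mult_nonneg_nonneg)
        moreover have "u i0 * z0 i0 > 0" using ui0 tau0 i0 by (simp add: z0_def)
        ultimately show ?thesis by simp
      qed
      define Su where "Su = (\<Sum>k<2*n. u k)"
      have Su0: "Su \<ge> 0" unfolding Su_def using unn by (intro sum_nonneg) auto
      define T0 where "T0 = Su * eps / (\<kappa> * W0) + 1"
      have "0 \<le> Su * eps / (\<kappa> * W0)" using Su0 eps0 kappa W0 by simp
      then have T0: "T0 > 0" by (simp add: T0_def)
      have T0big: "\<kappa> * W0 * T0 > Su * eps"
        using kappa W0 by (simp add: T0_def field_simps)
      obtain z where zinit: "\<forall>i<3*n. z i 0 = z0 i"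
        and zder: "\<forall>i<3*n. \<forall>t\<in>{0..T0}. (z i has_real_derivative Gv b (\<lambda>j. z j t) i) (at t within {0..T0})"
        and zlip: "\<forall>i<3*n. \<forall>t\<in>{0..T0}. \<forall>t'\<in>{0..T0}. \<bar>z i t - z i t'\<bar> \<le> K * \<bar>t - t'\<bar>"
      proof -
        have "\<exists>z. (\<forall>i<3*n. z i 0 = z0 i) \<and>
          (\<forall>i<3*n. \<forall>t\<in>{0..T0}. (z i has_real_derivative Gv b (\<lambda>j. z j t) i) (at t within {0..T0})) \<and>
          (\<forall>i<3*n. \<forall>t\<in>{0..T0}. \<forall>t'\<in>{0..T0}. \<bar>z i t - z i t'\<bar> \<le> K * \<bar>t - t'\<bar>)"
        proof (rule ode_exists)
          show "0 \<le> 6 * Cc" using Cc_nn by simp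
          show "0 \<le> K" using K0 by simp
          show "0 \<le> T0" using T0 by simp
          show "\<bar>Gv b v i - Gv b w i\<bar> \<le> 6 * Cc * (\<Sum>j<3*n. \<bar>v j - w j\<bar>)" if "i < 3*n" for v w i
            using Gv_lip[OF _ b0(2) that] b0 by simp
          show "\<bar>Gv b v i\<bar> \<le> K" if "i < 3*n" for v i
            using Gv_bnd[OF _ b0(2) that, of v] b0 unfolding K_def by linarith
        qed
        then show ?thesis using that by blast
      qed
      have zcont: "continuous_on {0..T0} (z j)" if "j < 3*n" for j
        by (rule lip_cont[of K]) (use K0 zlip that in auto)
      have zat: "(z j has_real_derivative Gv b (\<lambda>i. z i x) j) (at x)" if "j < 3*n" "0 < x" "x < T0" for j x
      proof -
        have "(z j has_real_derivative Gv b (\<lambda>i. z i x) j) (at x within {0..T0})"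
          using zder that by auto
        moreover have "at x within {0..T0} = at x" using that by (intro at_within_Icc_at) auto
        ultimately show ?thesis by simp
      qed
      have znn: "\<forall>j<3*n. \<forall>t\<in>{0..T0}. z j t \<ge> 0"
      proof -
        define \<phi> where "\<phi> t = (\<Sum>j<3*n. (min (z j t) 0)^2)" for t
        have \<phi>c: "continuous_on {0..T0} \<phi>"
          unfolding \<phi>_def by (intro continuous_intros continuous_on_sum) (auto intro!: zcont)
        have \<phi>0: "\<phi> 0 = 0" unfolding \<phi>_def using zinit z0r by simp
        have dec: "\<phi> t \<le> 0" if t: "t \<in> {0..T0}" for t
        proof -
          have "\<phi> 0 \<ge> \<phi> t"
          proof (rule DERIV_nonpos_imp_decreasing_open[of 0 t \<phi>])
            show "0 \<le> t" using t by auto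
            show "continuous_on {0..t} \<phi>" by (rule continuous_on_subset[OF \<phi>c]) (use t in auto)
            fix x assume x: "0 < x" "x < t"
            have D: "(\<phi> has_real_derivative (\<Sum>j<3*n. 2 * min (z j x) 0 * Gv b (\<lambda>i. z i x) j)) (at x)"
              unfolding \<phi>_def
            proof (rule DERIV_sum)
              fix j assume "j \<in> {..<3*n}"
              then have j: "j < 3*n" by auto
              show "((\<lambda>x. (min (z j x) 0)^2) has_real_derivative 2 * min (z j x) 0 * Gv b (\<lambda>i. z i x) j) (at x)"
              proof -
                have xT: "x < T0" using x t by auto
                show ?thesis using DERIV_chain2[OF hderiv zat[OF j x(1) xT]] by simp
              qed
            qed
            have "(\<Sum>j<3*n. 2 * min (z j x) 0 * Gv b (\<lambda>i. z i x) j) \<le> 0"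
            proof (rule sum_nonpos)
              fix j assume "j \<in> {..<3*n}"
              then have j: "j < 3*n" by auto
              show "2 * min (z j x) 0 * Gv b (\<lambda>i. z i x) j \<le> 0"
              proof (cases "z j x < 0")
                case True
                have "Gv b (\<lambda>i. z i x) j \<ge> 0" using Gv_nonneg[OF _ b0(2) j, of "\<lambda>i. z i x"] b0 True by simp
                then show ?thesis using True by (simp add: mult_nonpos_nonneg)
              next
                case False then show ?thesis by simp
              qed
            qed
            then show "\<exists>y. (\<phi> has_real_derivative y) (at x) \<and> y \<le> 0" using D by blast
          qed
          then show ?thesis using \<phi>0 by simp
        qed
        show ?thesis
        proof (intro allI impI ballI)
          fix j t assume j: "j < 3*n" and t: "t \<in> {0..T0}"
          have "(min (z j t) 0)^2 \<le> \<phi> t" unfolding \<phi>_def using j by (intro member_le_sum) auto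
          then have "(min (z j t) 0)^2 \<le> 0" using dec[OF t] by linarith
          then have "min (z j t) 0 = 0" by simp
          then show "z j t \<ge> 0" by (simp add: min_def split: if_splits)
        qed
      qed
      define nrm where "nrm t = state_norm n (\<lambda>i. z i t) (\<lambda>i. z (n+i) t) (\<lambda>i. z (2*n+i) t)" for t
      have cle: "\<bar>z j t\<bar> \<le> nrm t" if "j < 3*n" for j t
        unfolding nrm_def using comp_le_norm[OF that, of "\<lambda>j. z j t"] by simp
      define Wz where "Wz t = (\<Sum>k<2*n. u k * z k t)" for t
      have grow: "Wz T' \<ge> W0 + \<kappa> * W0 * T'"
        if T': "0 \<le> T'" "T' \<le> T0" and box: "\<forall>t\<in>{0..T'}. \<forall>j<3*n. z j t \<le> b" for T'
      proof -
        have boxf: "\<forall>j<3*n. 0 \<le> z j t \<and> z j t \<le> b" if "t \<in> {0..T'}" for t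
          using box znn that T' by auto
        have Wc: "continuous_on {0..T'} Wz"
          unfolding Wz_def
          by (intro continuous_intros continuous_on_sum) (use T' in \<open>auto intro!: continuous_on_subset[OF zcont]\<close>)
        have WD: "(Wz has_real_derivative (\<Sum>k<2*n. u k * Gv b (\<lambda>i. z i x) k)) (at x)"
          if x: "0 < x" "x < T'" for x
          unfolding Wz_def
        proof (rule DERIV_sum)
          fix k assume "k \<in> {..<2*n}"
          then have k: "k < 3*n" by auto
          show "((\<lambda>t. u k * z k t) has_real_derivative u k * Gv b (\<lambda>i. z i x) k) (at x)"
            using zat[OF k x(1)] x T' by (intro DERIV_cmult) auto
        qed
        have Wnn: "Wz t \<ge> 0" if "t \<in> {0..T'}" for t
          unfolding Wz_def using unn boxf[OF that] by (intro sum_nonneg mult_nonneg_nonneg) auto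
        have rate: "(\<Sum>k<2*n. u k * Gv b (\<lambda>i. z i x) k) \<ge> \<kappa> * Wz x" if x: "x \<in> {0..T'}" for x
        proof -
          have "(\<Sum>k<2*n. u k * Gv b (\<lambda>i. z i x) k) = (\<Sum>k<2*n. u k * Rv (\<lambda>i. z i x) k)"
            using boxf[OF x] by (intro sum.cong refl) (simp add: Gv_box)
          also have "\<dots> \<ge> \<mu> / 4 * (\<Sum>k<2*n. u k * z k x)"
          proof (rule growth[OF unn usub cU mu])
            show "0 \<le> \<eta>" using eta0 by simp
            show "\<eta> \<le> 1/2" by (rule eta1)
            show "\<eta> * c \<le> \<mu> / 4" by (rule eta2)
            show "\<forall>j<3*n. 0 \<le> z j x" using boxf[OF x] by auto
            show "\<forall>i<n. z i x + z (n+i) x + z (2*n+i) x \<le> \<eta>"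
            proof (intro allI impI)
              fix i assume i: "i < n"
              have "z i x \<le> b" "z (n+i) x \<le> b" "z (2*n+i) x \<le> b" using boxf[OF x] i by auto
              then show "z i x + z (n+i) x + z (2*n+i) x \<le> \<eta>" unfolding b_def by linarith
            qed
          qed
          finally show ?thesis unfolding \<kappa>_def Wz_def .
        qed
        have Wz0: "Wz 0 = W0" unfolding Wz_def W0_def using zinit by simp
        have m1: "Wz t \<ge> W0" if t: "t \<in> {0..T'}" for t
        proof -
          have "Wz 0 \<le> Wz t"
          proof (rule DERIV_nonneg_imp_increasing_open[of 0 t Wz])
            show "0 \<le> t" using t by auto
            show "continuous_on {0..t} Wz" by (rule continuous_on_subset[OF Wc]) (use t in auto)
            fix x assume x: "0 < x" "x < t"
            then have xx: "x \<in> {0..T'}" using t by auto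
            have "0 \<le> \<kappa> * Wz x" using kappa Wnn[OF xx] by simp
            then show "\<exists>y. (Wz has_real_derivative y) (at x) \<and> 0 \<le> y"
            proof -
              have "x < T'" using x t by auto
              then show ?thesis using WD[of x] rate[OF xx] x \<open>0 \<le> \<kappa> * Wz x\<close> by fastforce
            qed
          qed
          then show ?thesis using Wz0 by simp
        qed
        define h where "h t = Wz t - \<kappa> * W0 * t" for t
        have "h 0 \<le> h T'"
        proof (rule DERIV_nonneg_imp_increasing_open[of 0 T' h])
          show "0 \<le> T'" by (rule T'(1))
          show "continuous_on {0..T'} h" unfolding h_def by (intro continuous_intros Wc)
          fix x assume x: "0 < x" "x < T'"
          then have xx: "x \<in> {0..T'}" by auto
          have D: "(h has_real_derivative (\<Sum>k<2*n. u k * Gv b (\<lambda>i. z i x) k) - \<kappa> * W0) (at x)"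
            unfolding h_def using WD[OF x] by (auto intro!: derivative_eq_intros)
          have "\<kappa> * W0 \<le> \<kappa> * Wz x" using m1[OF xx] kappa by (intro mult_left_mono) auto
          then have "0 \<le> (\<Sum>k<2*n. u k * Gv b (\<lambda>i. z i x) k) - \<kappa> * W0" using rate[OF xx] by linarith
          then show "\<exists>y. (h has_real_derivative y) (at x) \<and> 0 \<le> y" using D by blast
        qed
        then show ?thesis unfolding h_def using Wz0 by (simp add: algebra_simps)
      qed
      have ex: "\<exists>t\<in>{0..T0}. eps \<le> nrm t"
      proof (rule ccontr)
        assume "\<not> ?thesis"
        then have small: "\<forall>t\<in>{0..T0}. nrm t < eps" by auto
        have "\<forall>t\<in>{0..T0}. \<forall>j<3*n. z j t \<le> b"
        proof (intro ballI allI impI)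
          fix t j assume tj: "t \<in> {0..T0}" "j < 3*n"
          have "z j t \<le> nrm t" using cle[OF tj(2), of t] by linarith
          moreover have "nrm t < eps" using small tj by auto
          ultimately show "z j t \<le> b" using eps0 unfolding eps_def by linarith
        qed
        then have "Wz T0 \<ge> W0 + \<kappa> * W0 * T0" using grow[of T0] T0 by auto
        moreover have "Wz T0 \<le> Su * eps"
        proof -
          have "Wz T0 \<le> (\<Sum>k<2*n. u k * eps)" unfolding Wz_def
          proof (intro sum_mono mult_left_mono)
            fix k assume "k \<in> {..<2*n}"
            then have k: "k < 2*n" by auto
            have "nrm T0 < eps" using small T0 by auto
            then show "z k T0 \<le> eps" using cle[of k T0] k by linarith
            show "0 \<le> u k" using unn k by auto
          qed
          then show ?thesis by (simp add: Su_def sum_distrib_right)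
        qed
        ultimately show False using T0big W0 by linarith
      qed
      have nrmc: "continuous_on {0..T0} nrm"
        unfolding nrm_def state_norm_def
        by (intro continuous_intros continuous_on_sum) (auto intro!: zcont)
      define S where "S = {t\<in>{0..T0}. eps \<le> nrm t}"
      have Sne: "S \<noteq> {}" using ex by (auto simp: S_def)
      have Sbdd: "bdd_below S" unfolding S_def by (rule bdd_belowI[of _ 0]) auto
      have "S = {0..T0} \<inter> nrm -` {eps..}" by (auto simp: S_def)
      then have Scl: "closed S" using continuous_closed_preimage[OF nrmc] by simp
      define Tst where "Tst = Inf S"
      have TS: "Tst \<in> S" unfolding Tst_def by (rule closed_contains_Inf[OF Sne Sbdd Scl])
      then have Tst: "0 \<le> Tst" "Tst \<le> T0" "eps \<le> nrm Tst" by (auto simp: S_def)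
      have before: "nrm t < eps" if "0 \<le> t" "t < Tst" for t
      proof (rule ccontr)
        assume "\<not> nrm t < eps"
        then have "t \<in> S" using that Tst by (auto simp: S_def)
        then have "Tst \<le> t" unfolding Tst_def using Sbdd by (rule cInf_lower)
        then show False using that by simp
      qed
      have box: "\<forall>j<3*n. 0 \<le> z j t \<and> z j t \<le> b" if t: "t \<in> {0..Tst}" for t
      proof (intro allI impI conjI)
        fix j assume j: "j < 3*n"
        show "0 \<le> z j t" using znn j t Tst by auto
        show "z j t \<le> b"
        proof (cases "t < Tst")
          case True
          then have "nrm t < eps" using before t by auto
          then show ?thesis using cle[OF j, of t] eps0 unfolding eps_def by linarith
        next
          case False
          then have tT: "t = Tst" using t by auto
          show ?thesis
          proof (cases "Tst \<le> eps / K")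
            case True
            have "\<bar>z j Tst - z j 0\<bar> \<le> K * \<bar>Tst - 0\<bar>"
            proof -
              have m: "Tst \<in> {0..T0}" "0 \<in> {0..T0}" using Tst T0 by auto
              show ?thesis using zlip[rule_format, OF j m] .
            qed
            moreover have "K * Tst \<le> eps" using True K0 by (simp add: field_simps)
            moreover have "z j 0 \<le> eps" using zinit j z0r[of j] tau1 by auto
            ultimately show ?thesis using tT Tst unfolding eps_def by auto
          next
            case False
            define t' where "t' = Tst - eps / K"
            have t': "0 \<le> t'" "t' < Tst" using False eps0 K0 by (auto simp: t'_def)
            have "\<bar>z j Tst - z j t'\<bar> \<le> K * \<bar>Tst - t'\<bar>"
            proof -
              have m: "Tst \<in> {0..T0}" "t' \<in> {0..T0}" using Tst t' by auto
              show ?thesis using zlip[rule_format, OF j m] .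
            qed
            moreover have "K * \<bar>Tst - t'\<bar> = eps" using K0 eps0 by (simp add: t'_def)
            moreover have "z j t' < eps" using before[OF t'] cle[OF j, of t'] by linarith
            ultimately show ?thesis using tT unfolding eps_def by auto
          qed
        qed
      qed
      have Geq: "Gv b (\<lambda>j. z j t) k = Rv (\<lambda>j. z j t) k" if "t \<in> {0..Tst}" for t k
        using box[OF that] by (intro Gv_box) auto
      have der: "(z k has_real_derivative Rv (\<lambda>j. z j t) k) (at t within {0..Tst})"
        if k: "k < 3*n" and t: "t \<in> {0..Tst}" for k t
      proof -
        have "(z k has_real_derivative Gv b (\<lambda>j. z j t) k) (at t within {0..T0})"
          using zder k t Tst by auto
        then have "(z k has_real_derivative Gv b (\<lambda>j. z j t) k) (at t within {0..Tst})"
          by (rule has_field_derivative_subset) (use Tst in auto)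
        then show ?thesis using Geq[OF t] by simp
      qed
      have sol: "is_solution n F N \<alpha> \<beta> \<sigma> \<delta> Tst (\<lambda>i. z i) (\<lambda>i. z (n+i)) (\<lambda>i. z (2*n+i))"
        unfolding is_solution_def
      proof (intro allI impI ballI conjI)
        fix i t assume i: "i < n" and t: "t \<in> {0..Tst}"
        show "(z i has_real_derivative rhs_e n F N \<beta> \<sigma> (\<lambda>k. z k t) (\<lambda>k. z (n+k) t) (\<lambda>k. z (2*n+k) t) i) (at t within {0..Tst})"
          using der[of i t] i t Rv_e[OF i, of "\<lambda>j. z j t"] by simp
        show "(z (n+i) has_real_derivative rhs_x n F N \<sigma> \<delta> (\<lambda>k. z k t) (\<lambda>k. z (n+k) t) i) (at t within {0..Tst})"
          using der[of "n+i" t] i t Rv_x[OF i, of "\<lambda>j. z j t"] by simp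
        show "(z (2*n+i) has_real_derivative rhs_r n F N \<alpha> \<delta> (\<lambda>k. z (n+k) t) (\<lambda>k. z (2*n+k) t) i) (at t within {0..Tst})"
          using der[of "2*n+i" t] i t Rv_r[OF i, of "\<lambda>j. z j t"] by simp
      qed
      have adm: "admissible n (\<lambda>i. z0 i) (\<lambda>i. z0 (n+i)) (\<lambda>i. z0 (2*n+i))"
        unfolding admissible_def
      proof (intro allI impI conjI)
        fix i assume i: "i < n"
        show "0 \<le> z0 i" "0 \<le> z0 (n+i)" "0 \<le> z0 (2*n+i)" using z0r by auto
        have "eps \<le> 1/12" using eta1 unfolding eps_def b_def by simp
        then show "z0 i + z0 (n+i) + z0 (2*n+i) \<le> 1" using z0r[of i] z0r[of "n+i"] z0r[of "2*n+i"] tau1 by linarith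
      qed
      have nrm0: "state_norm n (\<lambda>i. z0 i) (\<lambda>i. z0 (n+i)) (\<lambda>i. z0 (2*n+i)) < d"
      proof -
        have sq: "(z0 j)\<^sup>2 \<le> \<tau>\<^sup>2" for j using z0r[of j] by (intro power_mono) auto
        have "(\<Sum>i<n. (z0 i)\<^sup>2 + (z0 (n+i))\<^sup>2 + (z0 (2*n+i))\<^sup>2) \<le> (\<Sum>i<n. 3 * \<tau>\<^sup>2)"
        proof (rule sum_mono)
          fix i show "(z0 i)\<^sup>2 + (z0 (n+i))\<^sup>2 + (z0 (2*n+i))\<^sup>2 \<le> 3 * \<tau>\<^sup>2"
            using sq[of i] sq[of "n+i"] sq[of "2*n+i"] by linarith
        qed
        also have "\<dots> = 3 * real n * \<tau>\<^sup>2" by simp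
        also have "\<dots> < (\<tau> * (2 * real n + 2))\<^sup>2"
        proof -
          have e: "(2 * real n + 2)\<^sup>2 = 4 * (real n)\<^sup>2 + 8 * real n + 4" by (simp add: power2_eq_square algebra_simps)
          have "0 \<le> (real n)\<^sup>2" by simp
          then have "3 * real n < (2 * real n + 2)\<^sup>2" unfolding e by linarith
          then have "\<tau>\<^sup>2 * (3 * real n) < \<tau>\<^sup>2 * (2 * real n + 2)\<^sup>2" using tau0 by (intro mult_strict_left_mono) auto
          moreover have "(\<tau> * (2 * real n + 2))\<^sup>2 = \<tau>\<^sup>2 * (2 * real n + 2)\<^sup>2" by (rule power_mult_distrib)
          ultimately show ?thesis by (simp add: algebra_simps)
        qed
        also have "\<dots> \<le> d\<^sup>2" using tau2 tau0 by (intro power_mono) auto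
        finally show ?thesis unfolding state_norm_def using d by (intro real_less_lsqrt) auto
      qed
      show ?thesis
      proof (intro exI conjI)
        show "admissible n (\<lambda>i. z0 i) (\<lambda>i. z0 (n+i)) (\<lambda>i. z0 (2*n+i))" by (rule adm)
        show "state_norm n (\<lambda>i. z0 i) (\<lambda>i. z0 (n+i)) (\<lambda>i. z0 (2*n+i)) < d" by (rule nrm0)
        show "0 \<le> Tst" by (rule Tst(1))
        show "is_solution n F N \<alpha> \<beta> \<sigma> \<delta> Tst (\<lambda>i. z i) (\<lambda>i. z (n+i)) (\<lambda>i. z (2*n+i))" by (rule sol)
        show "\<forall>i<n. z i 0 = z0 i \<and> z (n+i) 0 = z0 (n+i) \<and> z (2*n+i) 0 = z0 (2*n+i)"
          using zinit by auto
        show "eps \<le> state_norm n (\<lambda>i. z i Tst) (\<lambda>i. z (n+i) Tst) (\<lambda>i. z (2*n+i) Tst)"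
          using Tst(3) by (simp add: nrm_def)
      qed
    qed
  qed
qed

end


theorem corollary1:
  fixes n :: nat and F :: "nat \<Rightarrow> nat \<Rightarrow> real" and N \<alpha> \<beta> \<sigma> \<delta> :: "nat \<Rightarrow> real"
  assumes "n > 0"
    and "\<forall>i<n. N i > 0"
    and "\<forall>i<n. \<forall>j<n. F i j \<ge> 0"
    and "\<forall>i<n. F i i = 0"
    and A1: "\<forall>j<n. (\<Sum>i\<in>{..<n} - {j}. F j i) = (\<Sum>i\<in>{..<n} - {j}. F i j)"
    and A2: "\<forall>i<n. \<alpha> i > 0 \<and> \<beta> i > 0 \<and> \<sigma> i > 0 \<and> \<delta> i > 0"
    and "spectral_abscissa (Umat n F N \<beta> \<sigma> \<delta>) > 0"
  shows "healthy_unstable n F N \<alpha> \<beta> \<sigma> \<delta>"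
proof -
  interpret seirs n F N \<alpha> \<beta> \<sigma> \<delta>
    by unfold_locales (use assms in auto)
  show ?thesis by (rule main) (use assms(7) in simp)
qed

end
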